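(* There exists a countable planar $\Pi$-graph that contains the Farey graph as an induced subgraph but is not a minor of the Farey graph.
   Context: Graphs are simple and may be infinite. The Farey graph is the graph with vertex set $\mathbb{Q}\cup\{\infty\}$ in which two rationals $a/b$ and $c/d$ written in lowest terms (allowing $\infty=(\pm1)/0$) are adjacent if and only if $ad-bc=\pm1$. A graph is infinitely edge-connected if it has at least two vertices and $G-E'$ is connected for every finite set $E'$ of edges. Paths are independent if they are internally vertex-disjoint. A $\Pi$-graph is an infinitely edge-connected graph that does not contain infinitely many independent paths between any two of its vertices. A graph $H$ is a minor of $G$ if there are pairwise disjoint non-empty vertex sets $V_h\subseteq V(G)$ ($h\in V(H)$), each inducing a connected subgraph of $G$, such that for every edge $hh'$ of $H$ there is an edge of $G$ between $V_h$ and $V_{h'}$. *)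

theory Defs
  imports "HOL-Analysis.Analysis"
begin

definition simple_graph :: "'v set \<Rightarrow> ('v \<Rightarrow> 'v \<Rightarrow> bool) \<Rightarrow> bool" where
  "simple_graph V E \<longleftrightarrow>
     (\<forall>u v. E u v \<longrightarrow> u \<in> V \<and> v \<in> V \<and> u \<noteq> v \<and> E v u)"

definition walk_in :: "'v set \<Rightarrow> ('v \<Rightarrow> 'v \<Rightarrow> bool) \<Rightarrow> 'v list \<Rightarrow> bool" where
  "walk_in S E p \<longleftrightarrow> p \<noteq> [] \<and> set p \<subseteq> S \<and>
     (\<forall>i. Suc i < length p \<longrightarrow> E (p ! i) (p ! Suc i))"

definition path_in :: "'v set \<Rightarrow> ('v \<Rightarrow> 'v \<Rightarrow> bool) \<Rightarrow> 'v list \<Rightarrow> bool" where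
  "path_in S E p \<longleftrightarrow> walk_in S E p \<and> distinct p"

definition connected_on :: "'v set \<Rightarrow> ('v \<Rightarrow> 'v \<Rightarrow> bool) \<Rightarrow> bool" where
  "connected_on S E \<longleftrightarrow>
     (\<forall>u\<in>S. \<forall>v\<in>S. \<exists>p. walk_in S E p \<and> hd p = u \<and> last p = v)"

definition delete_edges :: "('v \<Rightarrow> 'v \<Rightarrow> bool) \<Rightarrow> 'v set set \<Rightarrow> 'v \<Rightarrow> 'v \<Rightarrow> bool" where
  "delete_edges E F u v \<longleftrightarrow> E u v \<and> {u, v} \<notin> F"

definition inf_edge_connected :: "'v set \<Rightarrow> ('v \<Rightarrow> 'v \<Rightarrow> bool) \<Rightarrow> bool" where
  "inf_edge_connected V E \<longleftrightarrow>
     (\<exists>u\<in>V. \<exists>v\<in>V. u \<noteq> v) \<and>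
     (\<forall>F. finite F \<longrightarrow> connected_on V (delete_edges E F))"

definition inner :: "'v list \<Rightarrow> 'v set" where
  "inner p = set (butlast (tl p))"

definition inf_indep_paths :: "'v set \<Rightarrow> ('v \<Rightarrow> 'v \<Rightarrow> bool) \<Rightarrow> 'v \<Rightarrow> 'v \<Rightarrow> bool" where
  "inf_indep_paths V E u v \<longleftrightarrow>
     (\<exists>P. infinite P \<and>
          (\<forall>p\<in>P. path_in V E p \<and> hd p = u \<and> last p = v) \<and>
          (\<forall>p\<in>P. \<forall>q\<in>P. p \<noteq> q \<longrightarrow> inner p \<inter> inner q = {}))"

definition Pi_graph :: "'v set \<Rightarrow> ('v \<Rightarrow> 'v \<Rightarrow> bool) \<Rightarrow> bool" where
  "Pi_graph V E \<longleftrightarrow> inf_edge_connected V E \<and>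
     (\<forall>u\<in>V. \<forall>v\<in>V. u \<noteq> v \<longrightarrow> \<not> inf_indep_paths V E u v)"

definition is_minor :: "'h set \<Rightarrow> ('h \<Rightarrow> 'h \<Rightarrow> bool) \<Rightarrow> 'g set \<Rightarrow> ('g \<Rightarrow> 'g \<Rightarrow> bool) \<Rightarrow> bool" where
  "is_minor VH EH VG EG \<longleftrightarrow>
     (\<exists>B :: 'h \<Rightarrow> 'g set.
        (\<forall>h\<in>VH. B h \<noteq> {} \<and> B h \<subseteq> VG \<and> connected_on (B h) EG) \<and>
        (\<forall>h\<in>VH. \<forall>h'\<in>VH. h \<noteq> h' \<longrightarrow> B h \<inter> B h' = {}) \<and>
        (\<forall>h\<in>VH. \<forall>h'\<in>VH. EH h h' \<longrightarrow> (\<exists>x\<in>B h. \<exists>y\<in>B h'. EG x y)))"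

definition induced_subgraph_emb :: "'h set \<Rightarrow> ('h \<Rightarrow> 'h \<Rightarrow> bool) \<Rightarrow> 'g set \<Rightarrow> ('g \<Rightarrow> 'g \<Rightarrow> bool) \<Rightarrow> bool" where
  "induced_subgraph_emb VH EH VG EG \<longleftrightarrow>
     (\<exists>f. inj_on f VH \<and> f ` VH \<subseteq> VG \<and>
          (\<forall>x\<in>VH. \<forall>y\<in>VH. EG (f x) (f y) \<longleftrightarrow> EH x y))"

definition planar :: "'v set \<Rightarrow> ('v \<Rightarrow> 'v \<Rightarrow> bool) \<Rightarrow> bool" where
  "planar V E \<longleftrightarrow>
     (\<exists>(pos :: 'v \<Rightarrow> real \<times> real) (\<gamma> :: 'v \<Rightarrow> 'v \<Rightarrow> real \<Rightarrow> real \<times> real).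
        inj_on pos V \<and>
        (\<forall>u v. E u v \<longrightarrow> arc (\<gamma> u v) \<and> pathstart (\<gamma> u v) = pos u \<and>
               pathfinish (\<gamma> u v) = pos v \<and>
               path_image (\<gamma> u v) \<inter> pos ` V = {pos u, pos v}) \<and>
        (\<forall>u v u' v'. E u v \<longrightarrow> E u' v' \<longrightarrow> {u, v} \<noteq> {u', v'} \<longrightarrow>
               path_image (\<gamma> u v) \<inter> path_image (\<gamma> u' v') \<subseteq> pos ` V))"

text \<open>The Farey graph on Q \<union> {\<infinity>}: None stands for \<infinity> = 1/0, a rational q stands
  for its reduced fraction (quotient_of q) with positive denominator.\<close>
definition farey_frac :: "rat option \<Rightarrow> int \<times> int" where
  "farey_frac x = (case x of None \<Rightarrow> (1, 0) | Some q \<Rightarrow> quotient_of q)"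

definition farey_adj :: "rat option \<Rightarrow> rat option \<Rightarrow> bool" where
  "farey_adj x y \<longleftrightarrow>
     (let (a, b) = farey_frac x; (c, d) = farey_frac y in \<bar>a * d - b * c\<bar> = 1)"

end

theory Submission
  imports Defs "HOL-Library.Countable"
begin

definition nu :: "rat \<Rightarrow> int" where "nu q = fst (quotient_of q)"
definition de :: "rat \<Rightarrow> int" where "de q = snd (quotient_of q)"

lemma de_pos: "de q > 0"
  by (simp add: de_def quotient_of_denom_pos')

lemma nu_de_coprime: "coprime (nu q) (de q)"
  by (metis nu_def de_def prod.collapse quotient_of_coprime)

lemma q_eq: "q = of_int (nu q) / of_int (de q)"
  by (metis nu_def de_def prod.collapse quotient_of_div)

lemma qo_mk:
  assumes "b > 0" "coprime a b"
  shows "nu (of_int a / of_int b) = a" "de (of_int a / of_int b) = b"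
proof -
  have "quotient_of (of_int a / of_int b) = (a, b)"
    using assms by (simp add: Fract_of_int_quotient[symmetric] quotient_of_Fract)
  then show "nu (of_int a / of_int b) = a" "de (of_int a / of_int b) = b"
    by (auto simp: nu_def de_def)
qed

lemma ff_Some: "farey_frac (Some x) = (nu x, de x)"
  by (simp add: farey_frac_def nu_def de_def)

lemma fadj_SS: "farey_adj (Some x) (Some y) \<longleftrightarrow> \<bar>nu x * de y - de x * nu y\<bar> = 1"
  by (simp add: farey_adj_def ff_Some)

lemma fadj_NS: "farey_adj None (Some y) \<longleftrightarrow> de y = 1"
  using de_pos[of y] by (simp add: farey_adj_def farey_frac_def case_prod_unfold de_def)

lemma fadj_SN: "farey_adj (Some y) None \<longleftrightarrow> de y = 1"
  using de_pos[of y] by (simp add: farey_adj_def farey_frac_def case_prod_unfold de_def)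

lemma fadj_NN: "\<not> farey_adj None None"
  by (simp add: farey_adj_def farey_frac_def)

lemma fadj_sym: "farey_adj x y \<longleftrightarrow> farey_adj y x"
  apply (cases x; cases y)
  by (auto simp: fadj_NS fadj_SN fadj_NN fadj_SS abs_minus_commute algebra_simps)

lemma fadj_irrefl: "\<not> farey_adj x x"
  by (cases x) (auto simp: fadj_NN fadj_SS)

lemma rat_less_iff: "x < y \<longleftrightarrow> nu x * de y < nu y * de x"
proof -
  have b: "(of_int (de x) :: rat) > 0" "(of_int (de y) :: rat) > 0" using de_pos by auto
  have "x < y \<longleftrightarrow> of_int (nu x) / of_int (de x) < (of_int (nu y) / of_int (de y) :: rat)"
    using q_eq[of x] q_eq[of y] by simp
  also have "\<dots> \<longleftrightarrow> of_int (nu x) * of_int (de y) < (of_int (nu y) * of_int (de x) :: rat)"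
    using b by (simp add: divide_less_eq less_divide_eq mult.commute mult.left_commute)
  also have "\<dots> \<longleftrightarrow> nu x * de y < nu y * de x"
    by (metis of_int_less_iff of_int_mult)
  finally show ?thesis .
qed

lemma rat_eq_iff: "x = y \<longleftrightarrow> nu x * de y = nu y * de x"
  using rat_less_iff[of x y] rat_less_iff[of y x]
  by (metis linorder_neqE_linordered_idom not_less_iff_gr_or_eq)

lemma den_between:
  assumes adj: "farey_adj (Some x) (Some y)" and xz: "x < z" and zy: "z < y"
  shows "de z \<ge> de x + de y"
proof -
  define a b c d r s where "a = nu x" "b = de x" "c = nu y" "d = de y" "r = nu z" "s = de z"
  have bp: "b > 0" "d > 0" "s > 0" using de_pos by (auto simp: a_b_c_d_r_s_def)
  have xy: "a * d < c * b" using rat_less_iff[of x y] xz zy by (simp add: a_b_c_d_r_s_def)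
  have "\<bar>a * d - b * c\<bar> = 1" using adj by (simp add: fadj_SS a_b_c_d_r_s_def)
  then have det: "b * c - a * d = 1" using xy by (auto simp: abs_if algebra_simps)
  have 1: "r * b - a * s \<ge> 1" using rat_less_iff[of x z] xz by (simp add: a_b_c_d_r_s_def algebra_simps)
  have 2: "c * s - r * d \<ge> 1" using rat_less_iff[of z y] zy by (simp add: a_b_c_d_r_s_def algebra_simps)
  have "s = s * (b * c - a * d)" using det by simp
  also have "\<dots> = b * (c * s - r * d) + d * (r * b - a * s)" by (simp add: algebra_simps)
  also have "\<dots> \<ge> b * 1 + d * 1"
    using mult_left_mono[OF 1, of d] mult_left_mono[OF 2, of b] bp by (simp add: add_mono)
  finally show ?thesis by (simp add: a_b_c_d_r_s_def)
qed

lemma no_cross: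
  assumes adj: "farey_adj (Some x) (Some y)" and xz: "x < z" and zy: "z < y"
    and adj2: "farey_adj (Some z) t" and t1: "t \<noteq> Some x" "t \<noteq> Some y"
  shows "\<exists>t'. t = Some t' \<and> x < t' \<and> t' < y"
proof (cases t)
  case None
  then have "de z = 1" using adj2 fadj_SN by simp
  moreover have "de z \<ge> de x + de y" using den_between[OF adj xz zy] .
  ultimately show ?thesis using de_pos[of x] de_pos[of y] by simp
next
  case (Some t')
  have dz: "de z \<ge> de x + de y" using den_between[OF adj xz zy] .
  have adj2': "farey_adj (Some z) (Some t')" using adj2 Some by simp
  have adj2'': "farey_adj (Some t') (Some z)" using adj2' fadj_sym by blast
  show ?thesis
  proof (cases "y < t'")
    case True
    have "de y \<ge> de z + de t'" using den_between[OF adj2' zy True] .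
    then show ?thesis using dz de_pos[of x] de_pos[of t'] by simp
  next
    case False
    show ?thesis
    proof (cases "t' < x")
      case True
      have "de x \<ge> de t' + de z" using den_between[OF adj2'' True xz] .
      then show ?thesis using dz de_pos[of y] de_pos[of t'] by simp
    next
      case False
      then show ?thesis using \<open>\<not> y < t'\<close> t1 Some by (auto simp: order.order_iff_strict)
    qed
  qed
qed

lemma cop_lin: "x * s + y * t = (1::int) \<Longrightarrow> coprime s t"
proof -
  assume h: "x * s + y * t = 1"
  have "gcd s t dvd x * s + y * t" by (simp add: dvd_add)
  then have "gcd s t dvd 1" using h by simp
  then show ?thesis by (simp add: coprime_iff_gcd_eq_1)
qed

lemma bez: "coprime a (d::int) \<Longrightarrow> \<exists>a0 b0. a * b0 - d * a0 = 1"
proof -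
  assume c: "coprime a d"
  obtain u v where "u * a + v * d = gcd a d" using bezout_int by blast
  then have "u * a + v * d = 1" using c by (simp add: coprime_iff_gcd_eq_1)
  then have "a * u - d * (- v) = 1" by (simp add: algebra_simps)
  then show ?thesis by blast
qed

lemma rat_diff: "q \<noteq> 0 \<Longrightarrow> s \<noteq> 0 \<Longrightarrow>
  (of_int p / of_int q - of_int r / of_int s :: rat) = of_int (p * s - q * r) / of_int (q * s)"
  by (simp add: field_simps)

lemma close_nbrs:
  assumes e: "(\<epsilon>::rat) > 0"
  shows "\<exists>l r. l < v \<and> v < r \<and> v - l < \<epsilon> \<and> r - v < \<epsilon> \<and>
     farey_adj (Some l) (Some v) \<and> farey_adj (Some v) (Some r)"
proof -
  define a d where "a = nu v" "d = de v"
  have dp: "d > 0" using de_pos by (simp add: a_d_def)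
  have cop: "coprime a d" using nu_de_coprime by (simp add: a_d_def)
  obtain a0 b0 where ab: "a * b0 - d * a0 = 1" using bez[OF cop] by blast
  define k :: int where "k = \<lceil>1/\<epsilon>\<rceil> + \<bar>b0\<bar> + 1"
  have ceil_pos: "\<lceil>1/\<epsilon>\<rceil> \<ge> 1" using e by (simp add: one_le_ceiling)
  have kp: "k \<ge> 1" using ceil_pos unfolding k_def by linarith
  have kd: "k * d \<ge> k"
  proof -
    have "k * (d - 1) \<ge> 0" using kp dp by simp
    then show ?thesis by (simp add: algebra_simps)
  qed
  have k1: "b0 + k * d \<ge> \<lceil>1/\<epsilon>\<rceil> + 1" using kd unfolding k_def by linarith
  have k2: "k * d - b0 \<ge> \<lceil>1/\<epsilon>\<rceil> + 1" using kd unfolding k_def by linarith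
  define m1 m2 where "m1 = b0 + k * d" "m2 = k * d - b0"
  have m1p: "m1 > 0" "m2 > 0" using k1 k2 ceil_pos unfolding m1_m2_def by linarith+
  define l r :: rat where "l = of_int (a0 + k * a) / of_int m1" "r = of_int (k * a - a0) / of_int m2"
  have c1: "a * m1 - d * (a0 + k * a) = 1" using ab by (simp add: m1_m2_def algebra_simps)
  have c2: "a * m2 - d * (k * a - a0) = -1" using ab by (simp add: m1_m2_def algebra_simps)
  have cl: "coprime (a0 + k * a) m1"
    using cop_lin[of "-d" "a0 + k * a" a m1] c1 by (simp add: algebra_simps)
  have cr: "coprime (k * a - a0) m2"
    using cop_lin[of "d" "k * a - a0" "-a" m2] c2 by (simp add: algebra_simps)
  have nl: "nu l = a0 + k * a" "de l = m1" using qo_mk[OF m1p(1) cl] by (auto simp: l_r_def)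
  have nr: "nu r = k * a - a0" "de r = m2" using qo_mk[OF m1p(2) cr] by (auto simp: l_r_def)
  have v: "v = of_int a / of_int d" using q_eq[of v] by (simp add: a_d_def)
  have vl: "v - l = 1 / of_int (d * m1)"
    using rat_diff[of d m1 a "a0 + k * a"] dp m1p c1 by (simp add: v l_r_def)
  have rv: "r - v = 1 / of_int (d * m2)"
  proof -
    have "v - r = of_int (a * m2 - d * (k * a - a0)) / of_int (d * m2)"
      using rat_diff[of d m2 a "k * a - a0"] dp m1p by (simp add: v l_r_def)
    then have "v - r = - 1 / of_int (d * m2)" using c2 by simp
    then show ?thesis by (simp add: algebra_simps)
  qed
  have bnd: "1 / of_int (d * m) < \<epsilon>" if "m \<ge> \<lceil>1/\<epsilon>\<rceil> + 1" for m
  proof -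
    have "(of_int m :: rat) \<ge> of_int \<lceil>1/\<epsilon>\<rceil> + 1" using that
      by (metis of_int_1 of_int_add of_int_le_iff)
    moreover have "of_int \<lceil>1/\<epsilon>\<rceil> \<ge> 1/\<epsilon>" by (rule le_of_int_ceiling)
    ultimately have "of_int m > (1/\<epsilon>)" by linarith
    moreover have "1/\<epsilon> > 0" using e by simp
    ultimately have mpos: "of_int m > (0::rat)" by linarith
    have "of_int (d * m) \<ge> (of_int m :: rat)" using dp mpos
      by (simp add: mult_le_cancel_right1)
    then have "1 / of_int (d * m) \<le> 1 / (of_int m :: rat)"
      using mpos by (simp add: frac_le)
    also have "\<dots> < \<epsilon>" using \<open>of_int m > 1/\<epsilon>\<close> e mpos
      by (simp add: divide_less_eq mult.commute pos_divide_less_eq)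
    finally show ?thesis .
  qed
  have pos: "1 / of_int (d * m) > (0::rat)" if "m > 0" for m using that dp by simp
  show ?thesis
  proof (intro exI conjI)
    have "v - l > 0" using vl pos[OF m1p(1)] by (simp only:)
    then show "l < v" by simp
    have "r - v > 0" using rv pos[OF m1p(2)] by (simp only:)
    then show "v < r" by simp
    show "v - l < \<epsilon>" using vl bnd[OF k1[folded m1_m2_def]] by simp
    show "r - v < \<epsilon>" using rv bnd[OF k2[folded m1_m2_def]] by simp
    show "farey_adj (Some l) (Some v)" using c1
      by (simp add: fadj_SS nl a_d_def[symmetric] algebra_simps)
    show "farey_adj (Some v) (Some r)" using c2
      by (simp add: fadj_SS nr a_d_def[symmetric] algebra_simps)
  qed
qed

lemma abs_diff_adj:
  assumes "farey_adj (Some v) (Some z)"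
  shows "\<bar>v - z\<bar> = 1 / of_int (de v * de z)"
proof -
  have dp: "de v > 0" "de z > 0" using de_pos by auto
  have "v - z = of_int (nu v) / of_int (de v) - of_int (nu z) / of_int (de z)"
    by (subst (1) q_eq[of v], subst (1) q_eq[of z], rule refl)
  also have "\<dots> = of_int (nu v * de z - de v * nu z) / of_int (de v * de z)"
    using rat_diff[of "de v" "de z" "nu v" "nu z"] dp by simp
  finally have "v - z = of_int (nu v * de z - de v * nu z) / of_int (de v * de z)" .
  then have "\<bar>v - z\<bar> = of_int \<bar>nu v * de z - de v * nu z\<bar> / of_int (de v * de z)"
    using dp by (simp add: abs_divide)
  moreover have hX: "\<bar>nu v * de z - de v * nu z\<bar> = 1" using assms by (simp add: fadj_SS)
  ultimately have "\<bar>v - z\<bar> = of_int 1 / of_int (de v * de z)" by (simp only:)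
  then show ?thesis by simp
qed


lemma far_finite:
  assumes "l < v" "v < r"
  shows "finite {y. farey_adj (Some v) y \<and> (\<forall>z. y = Some z \<longrightarrow> z \<le> l \<or> r \<le> z)}"
proof -
  define \<delta> where "\<delta> = min (v - l) (r - v)"
  have dpos: "\<delta> > 0" using assms by (simp add: \<delta>_def)
  define M0 where "M0 = \<lceil>1/\<delta>\<rceil>"
  define M where "M = \<bar>nu v\<bar> * M0 + M0 + 1"
  have sub: "{y. farey_adj (Some v) y \<and> (\<forall>z. y = Some z \<longrightarrow> z \<le> l \<or> r \<le> z)} \<subseteq>
      insert None (Some ` (\<lambda>(c,e). of_int c / of_int e) ` ({-M..M} \<times> {1..M}))"
  proof
    fix y assume y: "y \<in> {y. farey_adj (Some v) y \<and> (\<forall>z. y = Some z \<longrightarrow> z \<le> l \<or> r \<le> z)}"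
    show "y \<in> insert None (Some ` (\<lambda>(c,e). of_int c / of_int e) ` ({-M..M} \<times> {1..M}))"
    proof (cases y)
      case None then show ?thesis by simp
    next
      case (Some z)
      have adj: "farey_adj (Some v) (Some z)" and zz: "z \<le> l \<or> r \<le> z" using y Some by auto
      have "\<bar>v - z\<bar> \<ge> \<delta>" using zz assms by (auto simp: \<delta>_def)
      then have ineq: "\<delta> \<le> 1 / of_int (de v * de z)" using abs_diff_adj[OF adj] by simp
      have dp: "de v > 0" "de z > 0" using de_pos by auto
      have "of_int (de v * de z) * \<delta> \<le> 1" using ineq dp
        by (simp add: le_divide_eq mult.commute)
      then have "of_int (de v * de z) \<le> 1 / \<delta>" using dpos by (simp add: le_divide_eq)
      also have "\<dots> \<le> of_int M0" unfolding M0_def by (rule le_of_int_ceiling)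
      finally have "de v * de z \<le> M0" by (simp only: of_int_le_iff)
      moreover have "de z \<le> de v * de z" using dp by simp
      ultimately have ez: "de z \<le> M0" by linarith
      have "\<bar>nu v * de z - de v * nu z\<bar> = 1" using adj by (simp add: fadj_SS)
      then have "\<bar>de v * nu z\<bar> \<le> \<bar>nu v * de z\<bar> + 1" by linarith
      moreover have "\<bar>nu z\<bar> \<le> \<bar>de v * nu z\<bar>" using dp by (simp add: abs_mult mult_le_cancel_right1)
      moreover have "\<bar>nu v * de z\<bar> \<le> \<bar>nu v\<bar> * M0" using ez dp
        by (simp add: abs_mult mult_left_mono)
      ultimately have "\<bar>nu z\<bar> \<le> \<bar>nu v\<bar> * M0 + 1" by linarith
      then have "nu z \<in> {-M..M}" using ez dp unfolding M_def by auto
      moreover have "de z \<in> {1..M}"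
      proof -
        have "0 \<le> \<bar>nu v\<bar> * M0" using ez dp by simp
        then have "de z \<le> M" using ez unfolding M_def by linarith
        then show ?thesis using dp by simp
      qed
      moreover have "z = (\<lambda>(c,e). of_int c / of_int e) (nu z, de z)" by (simp add: q_eq[symmetric])
      ultimately show ?thesis using Some by blast
    qed
  qed
  show ?thesis by (rule finite_subset[OF sub]) auto
qed


lemma descent: "farey_adj\<^sup>*\<^sup>* None (Some q)"
proof (induction "nat (de q)" arbitrary: q rule: less_induct)
  case less
  define a d where "a = nu q" "d = de q"
  have dp: "d > 0" using de_pos by (simp add: a_d_def)
  show ?case
  proof (cases "d = 1")
    case True
    then have "farey_adj None (Some q)" by (simp add: fadj_NS a_d_def)
    then show ?thesis by simp
  next
    case False
    then have d2: "d \<ge> 2" using dp by simp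
    have cop: "coprime a d" using nu_de_coprime by (simp add: a_d_def)
    obtain a0 b0 where ab: "a * b0 - d * a0 = 1" using bez[OF cop] by blast
    define t where "t = b0 div d"
    define b' a' where "b' = b0 mod d" "a' = a0 - t * a"
    have b0e: "b0 = t * d + b'" by (simp add: t_def b'_a'_def)
    have a'e: "a' = a0 - t * a" by (simp add: b'_a'_def)
    have c1: "a * b' - d * a' = 1"
    proof -
      have "a * b' - d * a' = a * (b0 - t * d) - d * (a0 - t * a)" using b0e a'e by simp
      also have "\<dots> = a * b0 - d * a0" by (simp add: algebra_simps)
      finally show ?thesis using ab by simp
    qed
    have b'nn: "b' \<ge> 0" "b' < d" using dp by (auto simp: b'_a'_def)
    have "b' \<noteq> 0"
    proof
      assume "b' = 0"
      then have "d * (- a') = 1" using c1 by simp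
      then have "d dvd 1" by (metis dvd_triv_left)
      then have "d \<le> 1" using zdvd_imp_le by simp
      then show False using d2 by simp
    qed
    then have b'p: "b' > 0" using b'nn by simp
    have cop': "coprime a' b'" using cop_lin[of "-d" a' a b'] c1 by (simp add: algebra_simps)
    define q' :: rat where "q' = of_int a' / of_int b'"
    have nq: "nu q' = a'" "de q' = b'" using qo_mk[OF b'p cop'] by (auto simp: q'_def)
    have "nat (de q') < nat (de q)" using nq b'nn b'p by (simp add: a_d_def[symmetric])
    then have IH: "farey_adj\<^sup>*\<^sup>* None (Some q')" using less by blast
    have "farey_adj (Some q') (Some q)" using c1
      by (simp add: fadj_SS nq a_d_def[symmetric] algebra_simps)
    then show ?thesis using IH by simp
  qed
qed

lemma succ_zip: "successively P xs \<longleftrightarrow> (\<forall>(a,b) \<in> set (zip xs (tl xs)). P a b)"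
proof (induction xs)
  case Nil then show ?case by simp
next
  case (Cons x xs)
  then show ?case by (cases xs) auto
qed

fun refine :: "(nat \<times> nat) list \<Rightarrow> (nat \<times> nat) list" where
  "refine (A # B # rest) = A # (fst A + fst B, snd A + snd B) # refine (B # rest)"
| "refine xs = xs"

definition R1 :: "nat \<times> nat \<Rightarrow> nat \<times> nat \<Rightarrow> bool" where
  "R1 A B \<longleftrightarrow> int (snd A) * int (fst B) - int (fst A) * int (snd B) = 1"

definition val :: "nat \<times> nat \<Rightarrow> rat" where
  "val A = of_nat (fst A) / of_nat (fst A + snd A)"

definition madd :: "nat \<times> nat \<Rightarrow> nat \<times> nat \<Rightarrow> nat \<times> nat" where
  "madd A B = (fst A + fst B, snd A + snd B)"

lemma R1_madd: "R1 A B \<Longrightarrow> R1 A (madd A B) \<and> R1 (madd A B) B"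
  by (simp add: R1_def madd_def algebra_simps)

lemma frac_lt: "(b::rat) > 0 \<Longrightarrow> d > 0 \<Longrightarrow> a * d < c * b \<Longrightarrow> a / b < c / d"
  by (simp add: field_simps)

lemma R1_val: "R1 A B \<Longrightarrow> val A < val B"
proof -
  assume r: "R1 A B"
  obtain m n m' n' where AB: "A = (m, n)" "B = (m', n')" by (cases A, cases B)
  have e: "int n * int m' - int m * int n' = 1" using r by (simp add: R1_def AB)
  have p1: "m + n > 0" using e by (cases "m = 0"; cases "n = 0") auto
  have p2: "m' + n' > 0" using e by (cases "m' = 0"; cases "n' = 0") auto
  have "int m * int n' < int m' * int n" using e by (simp add: mult.commute)
  then have "m * n' < m' * n" by (metis of_nat_less_iff of_nat_mult)
  then have "m * (m' + n') < m' * (m + n)" by (simp add: algebra_simps)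
  then have "(of_nat m :: rat) * of_nat (m' + n') < of_nat m' * of_nat (m + n)"
    by (metis of_nat_less_iff of_nat_mult)
  moreover have "(of_nat (m + n) :: rat) > 0" "(of_nat (m' + n') :: rat) > 0" using p1 p2 by (simp only: of_nat_0_less_iff)+
  ultimately show ?thesis unfolding val_def AB fst_conv snd_conv by (intro frac_lt) auto
qed

lemma refine_good: "successively R1 xs \<Longrightarrow> successively R1 (refine xs)"
proof (induction xs rule: refine.induct)
  case (1 A B rest)
  then have "R1 A B" "successively R1 (B # rest)" by auto
  then have IH: "successively R1 (refine (B # rest))" using 1 by simp
  have "hd (refine (B # rest)) = B" by (cases rest) auto
  moreover have "refine (B # rest) \<noteq> []" by (cases rest) auto
  ultimately show ?case using IH R1_madd[OF \<open>R1 A B\<close>]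
    by (simp add: successively_Cons madd_def)
qed auto

lemma refine_hd: "xs \<noteq> [] \<Longrightarrow> hd (refine xs) = hd xs"
  by (induction xs rule: refine.induct) auto

lemma refine_last: "xs \<noteq> [] \<Longrightarrow> last (refine xs) = last xs"
proof (induction xs rule: refine.induct)
  case (1 A B rest)
  then show ?case by (cases rest) auto
qed auto

lemma refine_nonempty: "xs \<noteq> [] \<Longrightarrow> refine xs \<noteq> []"
  by (induction xs rule: refine.induct) auto

lemma refine_set: "set xs \<subseteq> set (refine xs)"
  by (induction xs rule: refine.induct) auto

lemma refine_madd: "(A, B) \<in> set (zip xs (tl xs)) \<Longrightarrow> madd A B \<in> set (refine xs)"
proof (induction xs rule: refine.induct)
  case (1 A' B' rest)
  show ?case
  proof (cases "(A, B) = (A', B')")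
    case True then show ?thesis by (simp add: madd_def)
  next
    case False
    then have "(A, B) \<in> set (zip (B' # rest) (tl (B' # rest)))" using 1(2) by (cases rest) auto
    then show ?thesis using 1(1) by simp
  qed
qed auto

lemma zip_succ: "successively P xs \<Longrightarrow> (A, B) \<in> set (zip xs (tl xs)) \<Longrightarrow> P A B"
proof (induction xs)
  case Nil then show ?case by simp
next
  case (Cons x xs)
  then show ?case by (cases xs) auto
qed

lemma no_between:
  assumes "sorted_wrt (\<lambda>A B. val A < val B) xs" "(A, B) \<in> set (zip xs (tl xs))"
    "C \<in> set xs" "val A < val C" "val C < val B"
  shows False
  using assms
proof (induction xs)
  case Nil then show ?case by simp
next
  case (Cons x xs)
  show ?case
  proof (cases xs)
    case Nil then show ?thesis using Cons by simp
  next
    case (Cons y ys)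
    note xs = this
    show ?thesis
    proof (cases "(A, B) = (x, y)")
      case True
      then have "C = x \<or> C = y \<or> C \<in> set ys" using Cons.prems(3) xs by auto
      moreover have "\<forall>c\<in>set ys. val y < val c" using Cons.prems(1) xs by auto
      ultimately show ?thesis using Cons.prems True by auto
    next
      case False
      then have ab: "(A, B) \<in> set (zip xs (tl xs))" using Cons.prems(2) xs by auto
      then have "A \<in> set xs" by (meson in_set_zipE)
      then have "val x < val A" using Cons.prems(1) by auto
      then have "C \<noteq> x" using Cons.prems(4) by auto
      then have "C \<in> set xs" using Cons.prems(3) by auto
      then show ?thesis using Cons.IH Cons.prems ab by auto
    qed
  qed
qed

lemma good_sorted: "successively R1 xs \<Longrightarrow> sorted_wrt (\<lambda>A B. val A < val B) xs"
proof -
  assume "successively R1 xs"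
  then have "successively (\<lambda>A B. val A < val B) xs" by (rule successively_mono) (rule R1_val)
  moreover have "transp (\<lambda>A B. val A < val B)" by (auto simp: transp_def)
  ultimately show ?thesis using successively_conv_sorted_wrt by blast
qed

definition row :: "nat \<Rightarrow> (nat \<times> nat) list" where
  "row k = (refine ^^ k) [(0,1),(1,0)]"

lemma row_Suc: "row (Suc k) = refine (row k)" by (simp add: row_def)

lemma row_props: "successively R1 (row k) \<and> row k \<noteq> [] \<and> hd (row k) = (0,1) \<and> last (row k) = (1,0)"
proof (induction k)
  case 0 then show ?case by (simp add: row_def R1_def)
next
  case (Suc k) then show ?case
    by (simp add: row_Suc refine_good refine_hd refine_last refine_nonempty)
qed

lemma row_mono: "j \<le> k \<Longrightarrow> set (row j) \<subseteq> set (row k)"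
proof (induction k)
  case 0 then show ?case by simp
next
  case (Suc k) then show ?case
    using refine_set[of "row k"] by (auto simp: row_Suc le_Suc_eq)
qed

lemma row_edge_unique:
  assumes "(A, B) \<in> set (zip (row j) (tl (row j)))" "(A, B) \<in> set (zip (row k) (tl (row k)))"
  shows "j = k"
proof (rule ccontr)
  assume "j \<noteq> k"
  then consider "j < k" | "k < j" by linarith
  then show False
  proof cases
    case 1
    have r: "R1 A B" using zip_succ[OF conjunct1[OF row_props] assms(1)] .
    have "madd A B \<in> set (row (Suc j))" using refine_madd[OF assms(1)] by (simp add: row_Suc)
    then have "madd A B \<in> set (row k)" using row_mono[of "Suc j" k] 1 by auto
    then show False using no_between[OF good_sorted[OF conjunct1[OF row_props]] assms(2)]
      R1_val R1_madd[OF r] by blast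
  next
    case 2
    have r: "R1 A B" using zip_succ[OF conjunct1[OF row_props] assms(1)] .
    have "madd A B \<in> set (row (Suc k))" using refine_madd[OF assms(2)] by (simp add: row_Suc)
    then have "madd A B \<in> set (row j)" using row_mono[of "Suc k" j] 2 by auto
    then show False using no_between[OF good_sorted[OF conjunct1[OF row_props]] assms(1)]
      R1_val R1_madd[OF r] by blast
  qed
qed

lemma good_elem_nbr:
  "successively R1 xs \<Longrightarrow> length xs \<ge> 2 \<Longrightarrow> A \<in> set xs \<Longrightarrow> \<exists>B. R1 A B \<or> R1 B A"
proof (induction xs)
  case Nil then show ?case by simp
next
  case (Cons x xs)
  show ?case
  proof (cases xs)
    case Nil then show ?thesis using Cons by simp
  next
    case (Cons y ys)
    then have "R1 x y" using Cons.prems(1) by simp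
    show ?thesis
    proof (cases "A = x")
      case True then show ?thesis using \<open>R1 x y\<close> by blast
    next
      case False
      then have "A \<in> set xs" using Cons.prems by simp
      show ?thesis
      proof (cases "A = y")
        case True then show ?thesis using \<open>R1 x y\<close> by blast
      next
        case False
        then have "A \<in> set ys" using \<open>A \<in> set xs\<close> Cons by simp
        then have "length xs \<ge> 2" using Cons by (cases ys) auto
        then show ?thesis using Cons.IH Cons.prems \<open>A \<in> set xs\<close> by (auto simp: successively_Cons)
      qed
    qed
  qed
qed

lemma row_len: "length (row k) \<ge> 2"
proof (induction k)
  case 0 then show ?case by (simp add: row_def)
next
  case (Suc k)
  have "length (refine xs) \<ge> length xs" for xs by (induction xs rule: refine.induct) auto
  then show ?case using Suc by (simp add: row_Suc) (meson le_trans)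
qed

definition to_v :: "int \<times> int \<Rightarrow> rat option" where
  "to_v P = (if snd P = 0 then None else Some (of_int (fst P) / of_int (snd P)))"

definition nrm :: "int \<times> int \<Rightarrow> bool" where
  "nrm P \<longleftrightarrow> snd P \<ge> 0 \<and> coprime (fst P) (snd P) \<and> (snd P = 0 \<longrightarrow> fst P = 1)"

definition dt :: "int \<times> int \<Rightarrow> int \<times> int \<Rightarrow> int" where
  "dt P Q = fst P * snd Q - snd P * fst Q"

lemma nrm_pos: "nrm P \<Longrightarrow> snd P \<noteq> 0 \<Longrightarrow> nu (of_int (fst P) / of_int (snd P)) = fst P \<and> de (of_int (fst P) / of_int (snd P)) = snd P"
  using qo_mk[of "snd P" "fst P"] by (auto simp: nrm_def)

lemma fadj_vec:
  assumes "nrm P" "nrm Q"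
  shows "farey_adj (to_v P) (to_v Q) \<longleftrightarrow> \<bar>dt P Q\<bar> = 1"
proof -
  obtain a b c d where PQ: "P = (a, b)" "Q = (c, d)" by (cases P, cases Q)
  have n: "b \<ge> 0" "d \<ge> 0" "b = 0 \<longrightarrow> a = 1" "d = 0 \<longrightarrow> c = 1" using assms by (auto simp: nrm_def PQ)
  show ?thesis
  proof (cases "b = 0")
    case True
    show ?thesis
    proof (cases "d = 0")
      case True
      then show ?thesis using \<open>b = 0\<close> by (simp add: to_v_def PQ fadj_NN dt_def)
    next
      case False
      have "de (of_int c / of_int d) = d" using nrm_pos[OF assms(2)] False by (simp add: PQ)
      then show ?thesis using \<open>b = 0\<close> False n by (simp add: to_v_def PQ fadj_NS dt_def)
    qed
  next
    case False
    have bb: "nu (of_int a / of_int b) = a" "de (of_int a / of_int b) = b"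
      using nrm_pos[OF assms(1)] False by (auto simp: PQ)
    show ?thesis
    proof (cases "d = 0")
      case True
      then show ?thesis using False n bb by (simp add: to_v_def PQ fadj_SN dt_def)
    next
      case dF: False
      have "nu (of_int c / of_int d) = c" "de (of_int c / of_int d) = d"
        using nrm_pos[OF assms(2)] dF by (auto simp: PQ)
      then show ?thesis using False dF bb by (simp add: to_v_def PQ fadj_SS dt_def)
    qed
  qed
qed

lemma to_v_inj:
  assumes "nrm P" "nrm Q" "to_v P = to_v Q" shows "P = Q"
proof -
  obtain a b c d where PQ: "P = (a, b)" "Q = (c, d)" by (cases P, cases Q)
  have n: "b \<ge> 0" "d \<ge> 0" "b = 0 \<longrightarrow> a = 1" "d = 0 \<longrightarrow> c = 1" using assms by (auto simp: nrm_def PQ)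
  show ?thesis
  proof (cases "b = 0")
    case True
    then have "d = 0" using assms(3) by (auto simp: to_v_def PQ split: if_splits)
    then show ?thesis using True n PQ by simp
  next
    case False
    then have dF: "d \<noteq> 0" using assms(3) by (auto simp: to_v_def PQ split: if_splits)
    have e: "(of_int a / of_int b :: rat) = of_int c / of_int d" using assms(3) False dF
      by (simp add: to_v_def PQ)
    have "nu (of_int a / of_int b) = a" "de (of_int a / of_int b) = b"
      using nrm_pos[OF assms(1)] False by (auto simp: PQ)
    moreover have "nu (of_int c / of_int d) = c" "de (of_int c / of_int d) = d"
      using nrm_pos[OF assms(2)] dF by (auto simp: PQ)
    ultimately show ?thesis using e PQ by metis
  qed
qed

lemma ff_nrm: "nrm (farey_frac x)"
proof (cases x)
  case None then show ?thesis by (simp add: farey_frac_def nrm_def)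
next
  case (Some q)
  then show ?thesis using ff_Some[of q] nu_de_coprime[of q] de_pos[of q] by (simp add: nrm_def)
qed

lemma ff_to_v: "to_v (farey_frac x) = x"
proof (cases x)
  case None then show ?thesis by (simp add: farey_frac_def to_v_def)
next
  case (Some q)
  have "farey_frac x = (nu q, de q)" using Some ff_Some by simp
  then show ?thesis using Some de_pos[of q] q_eq[of q] by (simp add: to_v_def)
qed

definition vmap :: "int \<times> int \<Rightarrow> int \<times> int \<Rightarrow> nat \<times> nat \<Rightarrow> int \<times> int" where
  "vmap X Y A = (int (fst A) * fst X + int (snd A) * fst Y, int (fst A) * snd X + int (snd A) * snd Y)"

lemma dt_vmap: "dt (vmap X Y A) (vmap X Y B) =
   (int (fst A) * int (snd B) - int (snd A) * int (fst B)) * dt X Y"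
  by (simp add: dt_def vmap_def algebra_simps)

lemma dt_vmap_R1: "R1 A B \<Longrightarrow> dt (vmap X Y A) (vmap X Y B) = - dt X Y"
proof -
  assume "R1 A B"
  then have "int (fst A) * int (snd B) - int (snd A) * int (fst B) = -1"
    by (simp add: R1_def algebra_simps)
  then show ?thesis using dt_vmap[of X Y A B] by simp
qed

lemma cop_of_dt: "\<bar>dt P Q\<bar> = 1 \<Longrightarrow> coprime (fst P) (snd P)"
proof -
  assume h: "\<bar>dt P Q\<bar> = 1"
  then consider "dt P Q = 1" | "dt P Q = -1" by linarith
  then show ?thesis
  proof cases
    case 1
    then show ?thesis using cop_lin[of "snd Q" "fst P" "- fst Q" "snd P"] by (simp add: dt_def algebra_simps)
  next
    case 2
    then show ?thesis using cop_lin[of "- snd Q" "fst P" "fst Q" "snd P"] by (simp add: dt_def algebra_simps)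
  qed
qed

lemma cop_of_dt2: "\<bar>dt Q P\<bar> = 1 \<Longrightarrow> coprime (fst P) (snd P)"
  by (rule cop_of_dt[of P Q]) (simp add: dt_def abs_minus_commute algebra_simps)

lemma vmap_nrm:
  assumes X: "nrm X" and Y: "nrm Y" and d: "\<bar>dt X Y\<bar> = 1"
    and c: "coprime (fst (vmap X Y A)) (snd (vmap X Y A))"
  shows "nrm (vmap X Y A)"
proof -
  obtain m n where A: "A = (m, n)" by (cases A)
  obtain a b c' d' where XY: "X = (a, b)" "Y = (c', d')" by (cases X, cases Y)
  have n: "b \<ge> 0" "d' \<ge> 0" "b = 0 \<longrightarrow> a = 1" "d' = 0 \<longrightarrow> c' = 1" using X Y by (auto simp: nrm_def XY)
  have dd: "\<bar>a * d' - b * c'\<bar> = 1" using d by (simp add: dt_def XY)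
  have s: "snd (vmap X Y A) = int m * b + int n * d'" "fst (vmap X Y A) = int m * a + int n * c'"
    by (simp_all add: vmap_def A XY)
  have snn: "snd (vmap X Y A) \<ge> 0" using n by (simp add: s)
  have "fst (vmap X Y A) = 1" if z: "snd (vmap X Y A) = 0"
  proof -
    have "int m * b \<ge> 0" "int n * d' \<ge> 0" using n by auto
    then have z1: "int m * b = 0" "int n * d' = 0" using z s by linarith+
    show ?thesis
    proof (cases "b = 0")
      case True
      then have "d' \<noteq> 0" using dd by auto
      then have "n = 0" using z1 by simp
      have "a = 1" using True n by simp
      then have "coprime (int m) 0" using c True \<open>n = 0\<close> by (simp add: s)
      then have "int m = 1" by simp
      then show ?thesis using True n \<open>n = 0\<close> by (simp add: s)
    next
      case False
      then have "m = 0" using z1 by simp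
      show ?thesis
      proof (cases "d' = 0")
        case True
        then have "coprime (int n) 0" using c \<open>m = 0\<close> n by (simp add: s)
        then have "int n = 1" by simp
        then show ?thesis using True n \<open>m = 0\<close> by (simp add: s)
      next
        case False
        then have "n = 0" using z1 by simp
        then show ?thesis using c \<open>m = 0\<close> by (simp add: s)
      qed
    qed
  qed
  then show ?thesis using snn c by (simp add: nrm_def)
qed

lemma vmap_inj:
  assumes d: "dt X Y \<noteq> 0" and e: "vmap X Y A = vmap X Y B" shows "A = B"
proof -
  obtain m n m' n' where AB: "A = (m, n)" "B = (m', n')" by (cases A, cases B)
  obtain a b c d where XY: "X = (a, b)" "Y = (c, d)" by (cases X, cases Y)
  have e1: "(int m - int m') * a + (int n - int n') * c = 0"
    and e2: "(int m - int m') * b + (int n - int n') * d = 0"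
    using e by (simp_all add: vmap_def AB XY algebra_simps)
  have "(int m - int m') * (a * d - b * c) = d * ((int m - int m') * a + (int n - int n') * c)
       - c * ((int m - int m') * b + (int n - int n') * d)" by (simp add: algebra_simps)
  then have "(int m - int m') * (a * d - b * c) = 0" using e1 e2 by simp
  moreover have "a * d - b * c \<noteq> 0" using d by (simp add: dt_def XY)
  ultimately have "m = m'" by simp
  have "(int n - int n') * (a * d - b * c) = a * ((int m - int m') * b + (int n - int n') * d)
       - b * ((int m - int m') * a + (int n - int n') * c)" by (simp add: algebra_simps)
  then have "(int n - int n') * (a * d - b * c) = 0" using e1 e2 by simp
  then have "n = n'" using \<open>a * d - b * c \<noteq> 0\<close> by simp
  then show ?thesis using \<open>m = m'\<close> AB by simp
qed

lemma robust:
  assumes adj: "farey_adj x y" and fin: "finite Fb"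
  shows "\<exists>p. p \<noteq> [] \<and> hd p = y \<and> last p = x \<and> successively (\<lambda>u v. farey_adj u v \<and> {u, v} \<notin> Fb) p"
proof -
  define X Y where "X = farey_frac x" "Y = farey_frac y"
  have nX: "nrm X" "nrm Y" using ff_nrm by (auto simp: X_Y_def)
  have tX: "to_v X = x" "to_v Y = y" using ff_to_v by (auto simp: X_Y_def)
  have dXY: "\<bar>dt X Y\<bar> = 1" using adj fadj_vec[OF nX] tX by simp
  define t where "t A = to_v (vmap X Y A)" for A
  have nrm_row: "nrm (vmap X Y A)" if Ain: "A \<in> set (row k)" for A k
  proof -
    obtain B where "R1 A B \<or> R1 B A"
      using good_elem_nbr[OF conjunct1[OF row_props] row_len Ain] by blast
    then have "coprime (fst (vmap X Y A)) (snd (vmap X Y A))"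
    proof
      assume "R1 A B"
      then have "\<bar>dt (vmap X Y A) (vmap X Y B)\<bar> = 1" using dt_vmap_R1 dXY by simp
      then show ?thesis by (rule cop_of_dt)
    next
      assume "R1 B A"
      then have "\<bar>dt (vmap X Y B) (vmap X Y A)\<bar> = 1" using dt_vmap_R1 dXY by simp
      then show ?thesis by (rule cop_of_dt2)
    qed
    then show ?thesis using vmap_nrm[OF nX dXY] by blast
  qed
  have t_inj: "A = B" if "A \<in> set (row j)" "B \<in> set (row k)" "t A = t B" for A B j k
  proof -
    have "vmap X Y A = vmap X Y B"
      using to_v_inj[OF nrm_row[OF that(1)] nrm_row[OF that(2)]] that(3) by (simp add: t_def)
    moreover have "dt X Y \<noteq> 0" using dXY by auto
    ultimately show ?thesis using vmap_inj by blast
  qed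
  define EW where "EW k = {{t A, t B} | A B. (A, B) \<in> set (zip (row k) (tl (row k)))}" for k
  have zr: "A \<in> set (row k)" "B \<in> set (row k)" if "(A, B) \<in> set (zip (row k) (tl (row k)))" for A B k
  proof -
    show "A \<in> set (row k)" using set_zip_leftD[OF that] .
    have "B \<in> set (tl (row k))" using set_zip_rightD[OF that] .
    then show "B \<in> set (row k)" by (metis list.sel(2) list.set_sel(2))
  qed
  have uniq: "j = k" if e1: "e \<in> EW j" and e2: "e \<in> EW k" for e j k
  proof -
    obtain A B where AB: "e = {t A, t B}" "(A, B) \<in> set (zip (row j) (tl (row j)))"
      using e1 unfolding EW_def by blast
    obtain A' B' where AB': "e = {t A', t B'}" "(A', B') \<in> set (zip (row k) (tl (row k)))"
      using e2 unfolding EW_def by blast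
    have "t A = t A' \<and> t B = t B' \<or> t A = t B' \<and> t B = t A'" using AB(1) AB'(1)
      by (auto simp: doubleton_eq_iff)
    then show ?thesis
    proof
      assume "t A = t A' \<and> t B = t B'"
      then have "A = A'" "B = B'" using t_inj zr AB(2) AB'(2) by blast+
      then show ?thesis using row_edge_unique AB(2) AB'(2) by simp
    next
      assume "t A = t B' \<and> t B = t A'"
      then have "A = B'" "B = A'" using t_inj zr AB(2) AB'(2) by blast+
      moreover have "R1 A B" using zip_succ[OF conjunct1[OF row_props] AB(2)] .
      moreover have "R1 A' B'" using zip_succ[OF conjunct1[OF row_props] AB'(2)] .
      ultimately show ?thesis using R1_val by (metis less_asym)
    qed
  qed
  define bad where "bad = (\<Union>e\<in>Fb. {k. e \<in> EW k})"
  have "finite {k. e \<in> EW k}" for e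
  proof (cases "{k. e \<in> EW k} = {}")
    case True then show ?thesis by simp
  next
    case False
    then obtain k0 where "e \<in> EW k0" by auto
    then have "{k. e \<in> EW k} \<subseteq> {k0}" using uniq by auto
    then show ?thesis using finite_subset by blast
  qed
  then have "finite bad" using fin by (simp add: bad_def)
  then obtain k where k: "k \<notin> bad" using ex_new_if_finite[OF infinite_UNIV_nat] by blast
  define p where "p = map t (row k)"
  have rp: "successively R1 (row k)" "row k \<noteq> []" "hd (row k) = (0,1)" "last (row k) = (1,0)"
    using row_props by auto
  have "successively (\<lambda>A B. farey_adj (t A) (t B) \<and> {t A, t B} \<notin> Fb) (row k)"
    unfolding succ_zip
  proof (intro ballI, clarify)
    fix A B assume ab: "(A, B) \<in> set (zip (row k) (tl (row k)))"
    have "R1 A B" using zip_succ[OF rp(1) ab] .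
    then have "\<bar>dt (vmap X Y A) (vmap X Y B)\<bar> = 1" using dt_vmap_R1 dXY by simp
    then have "farey_adj (t A) (t B)"
      using fadj_vec[OF nrm_row[OF zr(1)[OF ab]] nrm_row[OF zr(2)[OF ab]]] by (simp add: t_def)
    moreover have "{t A, t B} \<in> EW k" using ab unfolding EW_def by blast
    then have "{t A, t B} \<notin> Fb" using k by (auto simp: bad_def)
    ultimately show "farey_adj (t A) (t B) \<and> {t A, t B} \<notin> Fb" by simp
  qed
  then have "successively (\<lambda>u v. farey_adj u v \<and> {u, v} \<notin> Fb) p"
    by (simp add: p_def successively_map)
  moreover have "hd p = y" using rp tX by (simp add: p_def hd_map t_def vmap_def X_Y_def[symmetric])
  moreover have "last p = x" using rp tX by (simp add: p_def last_map t_def vmap_def X_Y_def[symmetric])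
  moreover have "p \<noteq> []" using rp by (simp add: p_def)
  ultimately show ?thesis by blast
qed

definition sirr :: real where "sirr = (SOME s. 0 < s \<and> s < 1 \<and> s \<notin> \<rat>)"

lemma sirr: "0 < sirr" "sirr < 1" "sirr \<notin> \<rat>"
proof -
  have "\<exists>s::real. 0 < s \<and> s < 1 \<and> s \<notin> \<rat>"
  proof (rule ccontr)
    assume "\<not> ?thesis"
    then have "{0<..<(1::real)} \<subseteq> \<rat>" by (auto simp: greaterThanLessThan_iff)
    then have "countable {0<..<(1::real)}" using countable_rat countable_subset by blast
    then show False using uncountable_open_interval[of 0 "1::real"] by simp
  qed
  then have "0 < sirr \<and> sirr < 1 \<and> sirr \<notin> \<rat>" unfolding sirr_def by (rule someI_ex)
  then show "0 < sirr" "sirr < 1" "sirr \<notin> \<rat>" by auto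
qed

definition dk :: "nat \<Rightarrow> rat" where "dk k = of_int \<lfloor>2^k * sirr\<rfloor> / 2^k"

lemma dk_real: "(of_rat (dk k) :: real) = of_int \<lfloor>2^k * sirr\<rfloor> / 2^k"
  by (simp add: dk_def of_rat_divide of_rat_power)

lemma dk_approx: "of_rat (dk k) \<le> sirr" "sirr - of_rat (dk k) < 1 / 2^k"
proof -
  define y where "y = 2^k * sirr"
  have p: "(2::real)^k > 0" by simp
  have "of_int \<lfloor>y\<rfloor> \<le> y" "y < of_int \<lfloor>y\<rfloor> + 1" by linarith+
  then have a: "of_int \<lfloor>y\<rfloor> / 2^k \<le> sirr" "sirr < (of_int \<lfloor>y\<rfloor> + 1) / 2^k"
    using p by (simp_all add: y_def field_simps)
  show "of_rat (dk k) \<le> sirr" using a by (simp add: dk_real y_def)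
  have "(of_int \<lfloor>y\<rfloor> + 1) / 2^k = of_int \<lfloor>y\<rfloor> / 2^k + 1 / (2::real)^k" by (simp add: add_divide_distrib)
  then show "sirr - of_rat (dk k) < 1 / 2^k" using a by (simp add: dk_real y_def)
qed

lemma dk_01: "0 \<le> dk k" "dk k \<le> 1"
proof -
  have "0 \<le> \<lfloor>2^k * sirr\<rfloor>" using sirr by simp
  then show "0 \<le> dk k" by (simp add: dk_def)
  have "(of_rat (dk k) :: real) \<le> 1" using dk_approx(1)[of k] sirr by linarith
  then show "dk k \<le> 1" by (metis of_rat_1 of_rat_less_eq)
qed

definition NW :: "rat set" where "NW = {0, 1/2, 1} \<union> range dk"

lemma NW_sub: "c \<in> NW \<Longrightarrow> 0 \<le> c \<and> c \<le> 1"
  using dk_01 by (auto simp: NW_def)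

lemma NW_has: "0 \<in> NW" "1/2 \<in> NW" "1 \<in> NW" by (auto simp: NW_def)

lemma pow_small: "(\<delta>::real) > 0 \<Longrightarrow> \<exists>K. 1 / 2^K < \<delta>"
proof -
  assume d: "\<delta> > 0"
  obtain K :: nat where K: "1 / \<delta> < of_nat K" using reals_Archimedean2 by blast
  have "of_nat K < (2::real)^K" by (rule of_nat_less_two_power)
  then have "1 / \<delta> < 2^K" using K by linarith
  then have "1 < \<delta> * 2^K" using d by (simp add: field_simps)
  then have "1 / 2^K < \<delta>" by (simp add: field_simps)
  then show ?thesis by blast
qed

lemma dk_dist: "\<bar>of_rat (dk k) - sirr\<bar> < 1 / 2^k"
  using dk_approx[of k] by simp

lemma pow_mono_inv: "K \<le> k \<Longrightarrow> 1 / (2::real)^k \<le> 1 / 2^K"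
  by (simp add: frac_le power_increasing)

lemma NW_loc: "\<exists>\<epsilon>>0. finite {c \<in> NW. \<bar>c - v\<bar> < \<epsilon>}"
proof -
  have ne: "sirr \<noteq> of_rat v" using sirr(3) Rats_of_rat by metis
  define \<delta> where "\<delta> = \<bar>sirr - of_rat v\<bar> / 2"
  have dp: "\<delta> > 0" using ne by (simp add: \<delta>_def)
  obtain K where K: "1 / 2^K < \<delta>" using pow_small[OF dp] by blast
  obtain r where r: "r \<in> \<rat>" "0 < r" "r < \<delta>" using Rats_dense_in_real[OF dp] by blast
  obtain \<epsilon> where e: "r = of_rat \<epsilon>" using r(1) Rats_cases by blast
  have ep: "\<epsilon> > 0" using r(2) e by simp
  have "{c \<in> NW. \<bar>c - v\<bar> < \<epsilon>} \<subseteq> {0, 1/2, 1} \<union> dk ` {..<K}"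
  proof
    fix c assume c: "c \<in> {c \<in> NW. \<bar>c - v\<bar> < \<epsilon>}"
    show "c \<in> {0, 1/2, 1} \<union> dk ` {..<K}"
    proof (rule ccontr)
      assume "\<not> ?thesis"
      moreover have "c \<in> NW" using c by simp
      ultimately obtain k where k0: "c = dk k" by (auto simp: NW_def)
      have k: "c = dk k" "K \<le> k"
      proof -
        show "c = dk k" by (rule k0)
        show "K \<le> k"
        proof (rule ccontr)
          assume "\<not> K \<le> k"
          then have "c \<in> dk ` {..<K}" using k0 by auto
          then show False using \<open>\<not> (c \<in> {0, 1/2, 1} \<union> dk ` {..<K})\<close> by simp
        qed
      qed
      have "\<bar>of_rat (dk k) - sirr\<bar> < \<delta>" using dk_dist[of k] pow_mono_inv[OF k(2)] K by linarith
      moreover have "\<bar>of_rat c - of_rat v\<bar> < (of_rat \<epsilon> :: real)"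
      proof -
        have "\<bar>c - v\<bar> < \<epsilon>" using c by simp
        then have "(of_rat \<bar>c - v\<bar> :: real) < of_rat \<epsilon>" by (simp only: of_rat_less)
        then show ?thesis by (simp only: abs_of_rat of_rat_diff[symmetric])
      qed
      ultimately have h1: "\<bar>of_rat (dk k) - sirr\<bar> < \<delta>" "\<bar>of_rat (dk k) - of_rat v\<bar> < (of_rat \<epsilon> :: real)"
        using k(1) by auto
      have h2: "(of_rat \<epsilon> :: real) < \<delta>" using r e by simp
      have "\<bar>sirr - of_rat v\<bar> \<le> \<bar>of_rat (dk k) - sirr\<bar> + \<bar>of_rat (dk k) - of_rat v\<bar>" by linarith
      then show False using h1 h2 unfolding \<delta>_def by argo
    qed
  qed
  then have "finite {c \<in> NW. \<bar>c - v\<bar> < \<epsilon>}" by (rule finite_subset) auto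
  then show ?thesis using ep by blast
qed

lemma NW_inf: "infinite NW"
proof
  assume f: "finite NW"
  then have fr: "finite (range dk)" by (simp add: NW_def)
  define D where "D = (\<lambda>c. \<bar>of_rat c - sirr\<bar>) ` range dk"
  have fD: "finite D" using fr by (simp add: D_def)
  have neD: "D \<noteq> {}" by (simp add: D_def)
  have posD: "\<forall>x\<in>D. x > 0"
  proof
    fix x assume "x \<in> D"
    then obtain c where "x = \<bar>of_rat c - sirr\<bar>" by (auto simp: D_def)
    moreover have "of_rat c \<noteq> sirr" using sirr(3) Rats_of_rat by metis
    ultimately show "x > 0" by simp
  qed
  define m where "m = Min D"
  have mp: "m > 0" using posD fD neD by (simp add: m_def)
  obtain K where K: "1 / 2^K < m" using pow_small[OF mp] by blast
  have "\<bar>of_rat (dk K) - sirr\<bar> \<in> D" by (simp add: D_def)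
  then have "m \<le> \<bar>of_rat (dk K) - sirr\<bar>" using fD by (simp add: m_def)
  then show False using dk_dist[of K] K by linarith
qed

lemma inner_nth: "0 < i \<Longrightarrow> i < length p - 1 \<Longrightarrow> p ! i \<in> inner p"
proof -
  assume i: "0 < i" "i < length p - 1"
  have l: "i - 1 < length (butlast (tl p))" using i by simp
  have "butlast (tl p) ! (i - 1) = tl p ! (i - 1)" using l by (simp add: nth_butlast)
  also have "\<dots> = p ! i" using i by (simp add: nth_tl)
  finally show ?thesis unfolding inner_def using l by (metis nth_mem)
qed

lemma tl_rev': "tl (rev xs) = rev (butlast xs)"
  by (metis butlast_rev rev_rev_ident)

lemma inner_rev: "inner (rev p) = inner p"
  unfolding inner_def by (simp add: butlast_tl tl_rev')

lemma walk_succ: "walk_in S E p \<longleftrightarrow> p \<noteq> [] \<and> set p \<subseteq> S \<and> successively E p"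
  by (simp add: walk_in_def successively_conv_nth)

lemma path_rev:
  assumes sym: "\<And>a b. E a b \<Longrightarrow> E b a" and p: "path_in V E p"
  shows "path_in V E (rev p)"
proof -
  have "successively E p" using p by (simp add: path_in_def walk_succ)
  then have "successively (\<lambda>x y. E y x) p" by (rule successively_mono) (rule sym)
  then show ?thesis using p by (simp add: path_in_def walk_succ)
qed

lemma indep_sym:
  assumes sym: "\<And>a b. E a b \<Longrightarrow> E b a" and h: "inf_indep_paths V E u v"
  shows "inf_indep_paths V E v u"
proof -
  obtain P where P: "infinite P" "\<forall>p\<in>P. path_in V E p \<and> hd p = u \<and> last p = v"
    "\<forall>p\<in>P. \<forall>q\<in>P. p \<noteq> q \<longrightarrow> inner p \<inter> inner q = {}"
    using h by (auto simp: inf_indep_paths_def)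
  have "infinite (rev ` P)" using P(1) by (simp add: finite_image_iff inj_on_def)
  moreover have "\<forall>p\<in>rev ` P. path_in V E p \<and> hd p = v \<and> last p = u"
  proof
    fix p assume "p \<in> rev ` P"
    then obtain q where q: "q \<in> P" "p = rev q" by auto
    have "q \<noteq> []" using P(2) q by (auto simp: path_in_def walk_in_def)
    then show "path_in V E p \<and> hd p = v \<and> last p = u"
      using P(2) q path_rev[of E, OF sym] by (auto simp: hd_rev last_rev)
  qed
  moreover have "\<forall>p\<in>rev ` P. \<forall>q\<in>rev ` P. p \<noteq> q \<longrightarrow> inner p \<inter> inner q = {}"
    using P(3) by (auto simp: inner_rev)
  ultimately show ?thesis unfolding inf_indep_paths_def by blast
qed

lemma sep_no_inf:
  assumes fin: "finite S" and uv: "u \<noteq> v"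
    and sep: "\<And>p. path_in V E p \<Longrightarrow> hd p = u \<Longrightarrow> last p = v \<Longrightarrow> length p \<ge> 3 \<Longrightarrow> inner p \<inter> S \<noteq> {}"
  shows "\<not> inf_indep_paths V E u v"
proof
  assume "inf_indep_paths V E u v"
  then obtain P where P: "infinite P" "\<forall>p\<in>P. path_in V E p \<and> hd p = u \<and> last p = v"
    "\<forall>p\<in>P. \<forall>q\<in>P. p \<noteq> q \<longrightarrow> inner p \<inter> inner q = {}"
    by (auto simp: inf_indep_paths_def)
  define P' where "P' = P - {[u, v]}"
  have inf': "infinite P'" using P(1) by (simp add: P'_def)
  have len: "length p \<ge> 3" if pP': "p \<in> P'" for p
  proof -
    have pP: "p \<in> P" and pn: "p \<noteq> [u, v]" using pP' by (simp_all add: P'_def)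
    have p: "path_in V E p" "hd p = u" "last p = v" using pP P(2) by blast+
    have "p \<noteq> []" using p(1) by (simp add: path_in_def walk_in_def)
    then obtain a t where pt: "p = a # t" by (cases p) blast
    show ?thesis
    proof (cases t)
      case Nil
      then show ?thesis using p pt uv by simp
    next
      case (Cons b t')
      show ?thesis
      proof (cases t')
        case Nil
        then show ?thesis using p pt Cons pn by simp
      next
        case (Cons c t'')
        then show ?thesis using pt \<open>t = b # t'\<close> by simp
      qed
    qed
  qed
  have ex: "\<forall>p\<in>P'. \<exists>s. s \<in> inner p \<inter> S"
  proof
    fix p assume pP: "p \<in> P'"
    then have "p \<in> P" by (simp add: P'_def)
    then have "path_in V E p \<and> hd p = u \<and> last p = v" using P(2) by blast
    then have "inner p \<inter> S \<noteq> {}" using sep len[OF pP] by blast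
    then show "\<exists>s. s \<in> inner p \<inter> S" by blast
  qed
  have "\<exists>g. \<forall>p\<in>P'. g p \<in> inner p \<inter> S" using bchoice[OF ex] .
  then obtain g where g: "\<forall>p\<in>P'. g p \<in> inner p \<inter> S" by (elim exE)
  have "inj_on g P'"
  proof (rule inj_onI)
    fix p q assume pq: "p \<in> P'" "q \<in> P'" "g p = g q"
    have gi: "g p \<in> inner p" "g q \<in> inner q" using g pq(1,2) by blast+
    have pP: "p \<in> P" "q \<in> P" using pq(1,2) by (auto simp: P'_def)
    show "p = q"
    proof (rule ccontr)
      assume "p \<noteq> q"
      then have "inner p \<inter> inner q = {}" using P(3) pP by blast
      then show False using gi pq(3) by auto
    qed
  qed
  moreover have "g ` P' \<subseteq> S" using g by auto
  then have "finite (g ` P')" using fin finite_subset by blast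
  ultimately have "finite P'" using finite_imageD by blast
  then show False using inf' by simp
qed

lemma sep_by_ins:
  assumes p: "path_in V E p" "hd p = v" "last p = u" "length p \<ge> 3"
    and vI: "v \<in> Ins" and uI: "u \<notin> Ins" and uS: "u \<notin> S" and vS: "v \<notin> S"
    and edge: "\<And>a b. E a b \<Longrightarrow> a \<in> Ins \<Longrightarrow> b \<notin> Ins \<Longrightarrow> a \<in> S \<or> b \<in> S \<or> (a = v \<and> b = u)"
  shows "inner p \<inter> S \<noteq> {}"
proof -
  define n where "n = length p"
  have pne: "p \<noteq> []" using p by auto
  have p0: "p ! 0 = v" using p pne by (simp add: hd_conv_nth)
  have pl: "p ! (n - 1) = u" using p pne by (simp add: last_conv_nth n_def)
  have ex: "\<exists>j. j < n \<and> p ! j \<notin> Ins" using pl uI p(4) n_def by (intro exI[of _ "n - 1"]) auto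
  define j where "j = (LEAST j. j < n \<and> p ! j \<notin> Ins)"
  have j: "j < n" "p ! j \<notin> Ins" using LeastI_ex[OF ex] by (auto simp: j_def)
  have j0: "j \<noteq> 0"
  proof
    assume "j = 0"
    then show False using j(2) p0 vI by simp
  qed
  have jm: "p ! (j - 1) \<in> Ins"
  proof (rule ccontr)
    assume "p ! (j - 1) \<notin> Ins"
    moreover have "j - 1 < n" using j by simp
    ultimately have "j \<le> j - 1" unfolding j_def by (intro Least_le) simp
    then show False using j0 by simp
  qed
  have E: "E (p ! (j - 1)) (p ! j)"
    using p(1) j j0 unfolding path_in_def walk_in_def n_def by (metis Suc_pred' neq0_conv)
  have dist: "distinct p" using p(1) by (simp add: path_in_def)
  from edge[OF E jm j(2)] show ?thesis
  proof (elim disjE)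
    assume s: "p ! (j - 1) \<in> S"
    then have "p ! (j - 1) \<noteq> p ! 0" using p0 vS by auto
    then have "j - 1 \<noteq> 0" by auto
    then have "p ! (j - 1) \<in> inner p" using j by (intro inner_nth) (auto simp: n_def)
    then show ?thesis using s by auto
  next
    assume s: "p ! j \<in> S"
    then have "p ! j \<noteq> p ! (n - 1)" using pl uS by auto
    then have "j \<noteq> n - 1" by auto
    then have "p ! j \<in> inner p" using j j0 by (intro inner_nth) (auto simp: n_def)
    then show ?thesis using s by auto
  next
    assume s: "p ! (j - 1) = v \<and> p ! j = u"
    then have e1: "p ! (j - 1) = p ! 0" using p0 by simp
    have l1: "j - 1 < length p" "0 < length p" using j n_def by auto
    have "j - 1 = 0" using nth_eq_iff_index_eq[OF dist l1] e1 by simp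
    then have "j = 1" using j0 by simp
    moreover have e2: "p ! j = p ! (n - 1)" using s pl by simp
    have l2: "j < length p" "n - 1 < length p" using j n_def by auto
    have "j = n - 1" using nth_eq_iff_index_eq[OF dist l2] e2 by simp
    ultimately show ?thesis using p(4) n_def by simp
  qed
qed

lemma sep_main:
  assumes sym: "\<And>a b. E a b \<Longrightarrow> E b a" and fin: "finite S" and uv: "u \<noteq> v"
    and vI: "v \<in> Ins" and uI: "u \<notin> Ins" and uS: "u \<notin> S" and vS: "v \<notin> S"
    and edge: "\<And>a b. E a b \<Longrightarrow> a \<in> Ins \<Longrightarrow> b \<notin> Ins \<Longrightarrow> a \<in> S \<or> b \<in> S \<or> (a = v \<and> b = u)"
  shows "\<not> inf_indep_paths V E v u \<and> \<not> inf_indep_paths V E u v"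
proof -
  have a: "\<not> inf_indep_paths V E v u"
    by (rule sep_no_inf[OF fin uv[symmetric]]) (rule sep_by_ins[OF _ _ _ _ vI uI uS vS edge], auto)
  then show ?thesis using indep_sym[of E, OF sym] by blast
qed

definition fv :: "rat option \<Rightarrow> nat" where "fv x = 2 * to_nat x"
definition wv :: nat where "wv = 1"
definition VG :: "nat set" where "VG = insert wv (range fv)"
definition EG :: "nat \<Rightarrow> nat \<Rightarrow> bool" where
  "EG a b \<longleftrightarrow> (\<exists>x y. a = fv x \<and> b = fv y \<and> farey_adj x y) \<or>
     (\<exists>c\<in>NW. a = wv \<and> b = fv (Some c) \<or> a = fv (Some c) \<and> b = wv)"

lemma fv_inj [simp]: "fv x = fv y \<longleftrightarrow> x = y"
  by (simp add: fv_def)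

lemma fv_wv [simp]: "fv x \<noteq> wv" "wv \<noteq> fv x"
  by (simp_all add: fv_def wv_def)

lemma EG_ff [simp]: "EG (fv x) (fv y) \<longleftrightarrow> farey_adj x y"
  by (auto simp: EG_def)

lemma EG_wf [simp]: "EG wv (fv x) \<longleftrightarrow> (\<exists>c\<in>NW. x = Some c)" "EG (fv x) wv \<longleftrightarrow> (\<exists>c\<in>NW. x = Some c)"
  "\<not> EG wv wv"
  by (auto simp: EG_def)

lemma EG_sym: "EG a b \<Longrightarrow> EG b a"
  unfolding EG_def using fadj_sym by blast

lemma EG_V: "EG a b \<Longrightarrow> a \<in> VG \<and> b \<in> VG"
  unfolding EG_def VG_def by blast

lemma VG_cases: "a \<in> VG \<Longrightarrow> a = wv \<or> (\<exists>x. a = fv x)"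
  by (auto simp: VG_def)

lemma fadj01: "farey_adj (Some 0) (Some 1)"
  by (simp add: fadj_SS nu_def de_def)

lemma caseA:
  assumes uV: "u \<in> VG" and uv: "u \<noteq> fv (Some q)"
  shows "\<not> inf_indep_paths VG EG (fv (Some q)) u \<and> \<not> inf_indep_paths VG EG u (fv (Some q))"
proof -
  define v where "v = fv (Some q)"
  obtain \<epsilon>0 where e0: "\<epsilon>0 > 0" "finite {c \<in> NW. \<bar>c - q\<bar> < \<epsilon>0}" using NW_loc by blast
  have "\<exists>\<epsilon>1>0. \<forall>z. u = fv (Some z) \<longrightarrow> 2 * \<epsilon>1 \<le> \<bar>z - q\<bar>"
  proof (cases "\<exists>z. u = fv (Some z)")
    case True
    then obtain z where z: "u = fv (Some z)" by blast
    then have "z \<noteq> q" using uv by auto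
    then have "\<bar>z - q\<bar> / 2 > 0" by simp
    moreover have "\<forall>z'. u = fv (Some z') \<longrightarrow> 2 * (\<bar>z - q\<bar> / 2) \<le> \<bar>z' - q\<bar>" using z by simp
    ultimately show ?thesis by blast
  next
    case False
    then show ?thesis by (intro exI[of _ 1]) auto
  qed
  then obtain \<epsilon>1 where e1: "\<epsilon>1 > 0" "\<forall>z. u = fv (Some z) \<longrightarrow> 2 * \<epsilon>1 \<le> \<bar>z - q\<bar>" by blast
  define \<epsilon> where "\<epsilon> = min \<epsilon>0 \<epsilon>1"
  have ep: "\<epsilon> > 0" using e0 e1 by (simp add: \<epsilon>_def)
  obtain l r where lr: "l < q" "q < r" "q - l < \<epsilon>" "r - q < \<epsilon>"
    "farey_adj (Some l) (Some q)" "farey_adj (Some q) (Some r)"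
    using close_nbrs[OF ep, of q] by blast
  have u_out: False if "u = fv (Some z)" "l \<le> z" "z \<le> r" for z
  proof -
    have "\<bar>z - q\<bar> < \<epsilon>" using that lr by (auto simp: abs_if)
    moreover have "2 * \<epsilon>1 \<le> \<bar>z - q\<bar>" using e1 that by blast
    ultimately have "\<bar>z - q\<bar> < \<bar>z - q\<bar> / 2" unfolding \<epsilon>_def by linarith
    then have "z = q" by simp
    then show False using that uv by simp
  qed
  define Ins where "Ins = (fv \<circ> Some) ` {l<..<r}"
  define Far where "Far = {y. farey_adj (Some q) y \<and> (\<forall>z. y = Some z \<longrightarrow> z \<le> l \<or> r \<le> z)}"
  define NWi where "NWi = {c \<in> NW. l < c \<and> c < r \<and> c \<noteq> q}"
  define S where "S = (insert (fv (Some l)) (insert (fv (Some r)) (insert wv (fv ` Far \<union> (fv \<circ> Some) ` NWi)))) - {u}"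
  have finFar: "finite Far" unfolding Far_def using far_finite[OF lr(1) lr(2)] .
  have "NWi \<subseteq> {c \<in> NW. \<bar>c - q\<bar> < \<epsilon>0}"
  proof
    fix c assume "c \<in> NWi"
    then have "c \<in> NW" "l < c" "c < r" by (auto simp: NWi_def)
    then have "\<bar>c - q\<bar> < \<epsilon>" using lr by (auto simp: abs_if)
    then show "c \<in> {c \<in> NW. \<bar>c - q\<bar> < \<epsilon>0}" using \<open>c \<in> NW\<close> by (simp add: \<epsilon>_def)
  qed
  then have finNW: "finite NWi" using e0(2) finite_subset by blast
  have finS: "finite S" using finFar finNW by (simp add: S_def)
  have vI: "v \<in> Ins" using lr by (simp add: Ins_def v_def)
  have uI: "u \<notin> Ins"
  proof
    assume "u \<in> Ins"
    then obtain z where "u = fv (Some z)" "l < z" "z < r" by (auto simp: Ins_def)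
    then show False using u_out by fastforce
  qed
  have uS: "u \<notin> S" by (simp add: S_def)
  have vS: "v \<notin> S"
  proof -
    have "v \<noteq> fv (Some l)" "v \<noteq> fv (Some r)" "v \<noteq> wv" using lr by (auto simp: v_def)
    moreover have "v \<notin> fv ` Far" using fadj_irrefl by (auto simp: v_def Far_def)
    moreover have "v \<notin> (fv \<circ> Some) ` NWi" by (auto simp: v_def NWi_def)
    ultimately show ?thesis by (simp add: S_def)
  qed
  have ul: "u \<noteq> fv (Some l)" "u \<noteq> fv (Some r)" using u_out lr by fastforce+
  have edge: "a \<in> S \<or> b \<in> S \<or> (a = v \<and> b = u)" if ab: "EG a b" "a \<in> Ins" "b \<notin> Ins" for a b
  proof -
    obtain z where z: "a = fv (Some z)" "l < z" "z < r" using ab(2) by (auto simp: Ins_def)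
    have au: "a \<noteq> u" using ab(2) uI by auto
    from ab(1) z(1) consider (w) "b = wv" "z \<in> NW" | (f) y where "b = fv y" "farey_adj (Some z) y"
      unfolding EG_def by auto
    then show ?thesis
    proof cases
      case w
      show ?thesis
      proof (cases "z = q")
        case True
        then show ?thesis using w z by (cases "u = wv") (auto simp: S_def v_def)
      next
        case False
        then have "z \<in> NWi" using w z by (simp add: NWi_def)
        then have "a \<in> S" using z au by (auto simp: S_def)
        then show ?thesis by simp
      qed
    next
      case f
      have yout: "\<not> (\<exists>t. y = Some t \<and> l < t \<and> t < r)"
      proof
        assume "\<exists>t. y = Some t \<and> l < t \<and> t < r"
        then have "b \<in> Ins" using f by (auto simp: Ins_def)
        then show False using ab(3) by simp
      qed
      consider "z = q" | "z < q" | "q < z" by linarith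
      then show ?thesis
      proof cases
        case 1
        then have "y \<in> Far" using f yout by (auto simp: Far_def not_less)
        then show ?thesis using f z 1 by (cases "b = u") (auto simp: S_def v_def)
      next
        case 2
        have "y \<noteq> Some q" using yout lr by auto
        then have "y = Some l" using no_cross[OF lr(5) z(2) 2 f(2)] yout lr by force
        then show ?thesis using f ul by (simp add: S_def)
      next
        case 3
        have "y \<noteq> Some q" using yout lr by auto
        have "y = Some r"
        proof (rule ccontr)
          assume "y \<noteq> Some r"
          then obtain t' where "y = Some t'" "q < t'" "t' < r"
            using no_cross[OF lr(6) 3 z(3) f(2)] \<open>y \<noteq> Some q\<close> by blast
          moreover have "l < t'" using lr(1) \<open>q < t'\<close> by linarith
          ultimately show False using yout by blast
        qed
        then show ?thesis using f ul by (simp add: S_def)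
      qed
    qed
  qed
  show ?thesis using sep_main[of EG, OF EG_sym finS uv[folded v_def] vI uI uS vS edge]
    by (simp add: v_def)
qed

lemma caseB: "\<not> inf_indep_paths VG EG wv (fv None) \<and> \<not> inf_indep_paths VG EG (fv None) wv"
proof -
  define Ins where "Ins = insert wv ((fv \<circ> Some) ` {0<..<1})"
  define S where "S = {fv (Some 0), fv (Some 1)}"
  have edge: "a \<in> S \<or> b \<in> S \<or> (a = wv \<and> b = fv None)" if ab: "EG a b" "a \<in> Ins" "b \<notin> Ins" for a b
  proof (cases "a = wv")
    case True
    then obtain c where c: "c \<in> NW" "b = fv (Some c)" using ab(1) unfolding EG_def by auto
    then have "0 \<le> c" "c \<le> 1" using NW_sub by auto
    moreover have "\<not> (0 < c \<and> c < 1)" using ab(3) c by (auto simp: Ins_def)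
    ultimately have "c = 0 \<or> c = 1" by auto
    then show ?thesis using c by (auto simp: S_def)
  next
    case False
    then obtain z where z: "a = fv (Some z)" "0 < z" "z < 1" using ab(2) by (auto simp: Ins_def)
    from ab(1) z(1) consider "b = wv" | y where "b = fv y" "farey_adj (Some z) y"
      unfolding EG_def by auto
    then show ?thesis
    proof cases
      case 1 then show ?thesis using ab(3) by (simp add: Ins_def)
    next
      case 2
      show ?thesis
      proof (cases "y = Some 0 \<or> y = Some 1")
        case True then show ?thesis using 2 by (auto simp: S_def)
      next
        case False
        then obtain t where "y = Some t" "0 < t" "t < 1" using no_cross[OF fadj01 z(2) z(3) 2(2)] by auto
        then have "b \<in> Ins" using 2 by (auto simp: Ins_def)
        then show ?thesis using ab(3) by simp
      qed
    qed
  qed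
  have "finite S" by (simp add: S_def)
  moreover have "fv None \<noteq> wv" by simp
  moreover have "wv \<in> Ins" "fv None \<notin> Ins" "fv None \<notin> S" "wv \<notin> S" by (auto simp: Ins_def S_def)
  ultimately show ?thesis using sep_main[of EG, OF EG_sym, of S "fv None" wv Ins VG] edge by blast
qed

lemma G_noinf:
  assumes "u \<in> VG" "v \<in> VG" "u \<noteq> v"
  shows "\<not> inf_indep_paths VG EG u v"
proof -
  consider (a) q where "v = fv (Some q)" | (b) q where "u = fv (Some q)" | (c) "u \<in> {wv, fv None}" "v \<in> {wv, fv None}"
    using assms(1,2) by (metis VG_cases insertCI not_None_eq)
  then show ?thesis
  proof cases
    case a then show ?thesis using caseA[OF assms(1)] assms(3) by blast
  next
    case b
    then have "v \<noteq> fv (Some q)" using assms(3) by simp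
    then show ?thesis using caseA[OF assms(2), of q] b by simp
  next
    case c then show ?thesis using caseB assms(3) by auto
  qed
qed

lemma succ_rtr: "successively R p \<Longrightarrow> p \<noteq> [] \<Longrightarrow> R\<^sup>*\<^sup>* (hd p) (last p)"
proof (induction p)
  case Nil then show ?case by simp
next
  case (Cons x xs)
  show ?case
  proof (cases xs)
    case Nil then show ?thesis by simp
  next
    case (Cons y ys)
    then have "R x y" "successively R xs" using Cons.prems by auto
    then have "R\<^sup>*\<^sup>* y (last xs)" using Cons.IH Cons by simp
    then show ?thesis using \<open>R x y\<close> Cons by (simp add: converse_rtranclp_into_rtranclp)
  qed
qed

lemma rtr_walk:
  assumes RV: "\<And>a b. R a b \<Longrightarrow> a \<in> V \<and> b \<in> V" and aV: "a \<in> V" and r: "R\<^sup>*\<^sup>* a b"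
  shows "\<exists>p. walk_in V R p \<and> hd p = a \<and> last p = b"
  using r
proof (induction rule: rtranclp_induct)
  case base
  then show ?case using aV by (intro exI[of _ "[a]"]) (simp add: walk_succ)
next
  case (step y z)
  then obtain p where p: "walk_in V R p" "hd p = a" "last p = y" by blast
  have "walk_in V R (p @ [z])"
    using p step(2) RV by (auto simp: walk_succ successively_append_iff)
  then show ?case using p by (intro exI[of _ "p @ [z]"]) (auto simp: walk_succ)
qed

lemma rtr_sym: "(\<And>a b. R a b \<Longrightarrow> R b a) \<Longrightarrow> R\<^sup>*\<^sup>* a b \<Longrightarrow> R\<^sup>*\<^sup>* b a"
proof -
  assume s: "\<And>a b. R a b \<Longrightarrow> R b a" and r: "R\<^sup>*\<^sup>* a b"
  from r show ?thesis
  proof (induction rule: rtranclp_induct)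
    case base then show ?case by simp
  next
    case (step y z)
    then show ?case using s by (meson converse_rtranclp_into_rtranclp)
  qed
qed

lemma rtr_map:
  assumes r: "R\<^sup>*\<^sup>* a b" and h: "\<And>x y. R x y \<Longrightarrow> S\<^sup>*\<^sup>* (f x) (f y)"
  shows "S\<^sup>*\<^sup>* (f a) (f b)"
  using r
proof (induction rule: rtranclp_induct)
  case base then show ?case by simp
next
  case (step y z) then show ?case using h by (meson rtranclp_trans)
qed

lemma simple_G: "simple_graph VG EG"
  unfolding simple_graph_def
proof (intro allI impI conjI)
  fix u v assume e: "EG u v"
  show "u \<in> VG" "v \<in> VG" using EG_V[OF e] by auto
  show "EG v u" using EG_sym[OF e] .
  show "u \<noteq> v"
  proof
    assume "u = v"
    then show False using e fadj_irrefl unfolding EG_def by auto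
  qed
qed

lemma G_iec: "inf_edge_connected VG EG"
  unfolding inf_edge_connected_def
proof (intro conjI allI impI)
  show "\<exists>u\<in>VG. \<exists>v\<in>VG. u \<noteq> v" by (intro bexI[of _ wv] bexI[of _ "fv None"]) (auto simp: VG_def)
next
  fix Fe :: "nat set set" assume fin: "finite Fe"
  define D where "D = delete_edges EG Fe"
  have DV: "D a b \<Longrightarrow> a \<in> VG \<and> b \<in> VG" for a b using EG_V by (auto simp: D_def delete_edges_def)
  have Dsym: "D a b \<Longrightarrow> D b a" for a b using EG_sym by (auto simp: D_def delete_edges_def insert_commute)
  define Fb where "Fb = (image fv) -` Fe"
  have finFb: "finite Fb" unfolding Fb_def
    by (rule finite_vimageI[OF fin]) (simp add: inj_image_eq_iff inj_def)
  have fedge: "D\<^sup>*\<^sup>* (fv x) (fv y)" if "farey_adj x y" for x y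
  proof -
    have "farey_adj y x" using that fadj_sym by blast
    then obtain p where p: "p \<noteq> []" "hd p = x" "last p = y"
      "successively (\<lambda>u v. farey_adj u v \<and> {u, v} \<notin> Fb) p"
      using robust[OF _ finFb] by blast
    have "successively D (map fv p)"
      unfolding successively_map
      by (rule successively_mono[OF p(4)]) (auto simp: D_def delete_edges_def Fb_def)
    then have "D\<^sup>*\<^sup>* (hd (map fv p)) (last (map fv p))" using succ_rtr p(1) by blast
    then show ?thesis using p by (simp add: hd_map last_map)
  qed
  have reachF: "D\<^sup>*\<^sup>* (fv None) (fv x)" for x
  proof (cases x)
    case None then show ?thesis by simp
  next
    case (Some q)
    show ?thesis using rtr_map[OF descent[of q], of D fv] fedge Some by blast
  qed
  have "\<exists>c\<in>NW. {fv (Some c), wv} \<notin> Fe"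
  proof (rule ccontr)
    assume "\<not> ?thesis"
    then have "(\<lambda>c. {fv (Some c), wv}) ` NW \<subseteq> Fe" by auto
    moreover have "inj_on (\<lambda>c. {fv (Some c), wv}) NW"
      by (auto simp: inj_on_def doubleton_eq_iff)
    ultimately have "finite NW" using fin by (meson finite_imageD finite_subset)
    then show False using NW_inf by simp
  qed
  then obtain c where c: "c \<in> NW" "{fv (Some c), wv} \<notin> Fe" by blast
  have "D (fv (Some c)) wv" using c by (auto simp: D_def delete_edges_def)
  then have reachW: "D\<^sup>*\<^sup>* (fv None) wv" using reachF[of "Some c"] by simp
  have reach: "D\<^sup>*\<^sup>* (fv None) a" if "a \<in> VG" for a
    using that reachF reachW by (auto simp: VG_def)
  show "connected_on VG (delete_edges EG Fe)"
    unfolding connected_on_def D_def[symmetric]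
  proof (intro ballI)
    fix u v assume uv: "u \<in> VG" "v \<in> VG"
    have "D\<^sup>*\<^sup>* u (fv None)" using rtr_sym[of D, OF Dsym reach[OF uv(1)]] by blast
    then have "D\<^sup>*\<^sup>* u v" using reach[OF uv(2)] by simp
    then show "\<exists>p. walk_in VG D p \<and> hd p = u \<and> last p = v" using rtr_walk[OF DV uv(1)] by blast
  qed
qed

lemma G_Pi: "Pi_graph VG EG"
  unfolding Pi_graph_def using G_iec G_noinf by blast

lemma de1_eq: "de q = 1 \<Longrightarrow> q = of_int (nu q)"
  using q_eq[of q] by simp

lemma nbr_sign:
  assumes d2: "de q \<ge> 2" and a1: "farey_adj (Some q) (Some z1)" and a2: "farey_adj (Some q) (Some z2)"
    and e1: "de z1 \<le> de q" and e2: "de z2 \<le> de q" and ne: "z1 \<noteq> z2"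
  shows "nu q * de z1 - de q * nu z1 = - (nu q * de z2 - de q * nu z2) \<and> farey_adj (Some z1) (Some z2)"
proof -
  define a d c1 c2 f1 f2 where "a = nu q" "d = de q" "c1 = nu z1" "c2 = nu z2" "f1 = de z1" "f2 = de z2"
  have cop: "coprime a d" using nu_de_coprime by (simp add: a_d_c1_c2_f1_f2_def)
  have fp: "f1 > 0" "f2 > 0" using de_pos by (auto simp: a_d_c1_c2_f1_f2_def)
  have s1: "\<bar>a * f1 - d * c1\<bar> = 1" using a1 by (simp add: fadj_SS a_d_c1_c2_f1_f2_def)
  have s2: "\<bar>a * f2 - d * c2\<bar> = 1" using a2 by (simp add: fadj_SS a_d_c1_c2_f1_f2_def)
  have l1: "f1 < d"
  proof (rule ccontr)
    assume "\<not> f1 < d"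
    then have "f1 = d" using e1 by (simp add: a_d_c1_c2_f1_f2_def)
    then have h1: "\<bar>d * (a - c1)\<bar> = 1" using s1 by (simp add: algebra_simps)
    have "d dvd \<bar>d * (a - c1)\<bar>" unfolding dvd_abs_iff by simp
    then have "d dvd 1" using h1 by simp
    then show False using d2 zdvd_imp_le by (fastforce simp: a_d_c1_c2_f1_f2_def)
  qed
  have l2: "f2 < d"
  proof (rule ccontr)
    assume "\<not> f2 < d"
    then have "f2 = d" using e2 by (simp add: a_d_c1_c2_f1_f2_def)
    then have h1: "\<bar>d * (a - c2)\<bar> = 1" using s2 by (simp add: algebra_simps)
    have "d dvd \<bar>d * (a - c2)\<bar>" unfolding dvd_abs_iff by simp
    then have "d dvd 1" using h1 by simp
    then show False using d2 zdvd_imp_le by (fastforce simp: a_d_c1_c2_f1_f2_def)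
  qed
  have neq: "a * f1 - d * c1 \<noteq> a * f2 - d * c2"
  proof
    assume h: "a * f1 - d * c1 = a * f2 - d * c2"
    then have "a * (f1 - f2) = d * (c1 - c2)" by (simp add: algebra_simps)
    then have "d dvd a * (f1 - f2)" by (metis dvd_triv_left)
    then have "d dvd (f1 - f2)" using cop by (metis coprime_commute coprime_dvd_mult_right_iff)
    moreover have "\<bar>f1 - f2\<bar> < d" using l1 l2 fp by linarith
    ultimately have "f1 - f2 = 0"
    proof (cases "f1 - f2 = 0")
      case False
      assume dv: "d dvd (f1 - f2)" and lt: "\<bar>f1 - f2\<bar> < d"
      have "\<bar>d\<bar> \<le> \<bar>f1 - f2\<bar>" using dvd_imp_le_int[OF False dv] .
      then show ?thesis using lt by linarith
    qed
    then have "f1 = f2" by simp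
    moreover then have "c1 = c2" using h d2 by (simp add: a_d_c1_c2_f1_f2_def)
    ultimately have "z1 = z2" using rat_eq_iff[of z1 z2] by (simp add: a_d_c1_c2_f1_f2_def)
    then show False using ne by simp
  qed
  have opp: "a * f1 - d * c1 = - (a * f2 - d * c2)" using s1 s2 neq by (auto simp: abs_if split: if_splits)
  then have "a * (f1 + f2) = d * (c1 + c2)" by (simp add: algebra_simps)
  then have "d dvd a * (f1 + f2)" by (metis dvd_triv_left)
  then have dd: "d dvd (f1 + f2)" using cop by (metis coprime_commute coprime_dvd_mult_right_iff)
  have "f1 + f2 = d"
  proof -
    obtain k where k: "f1 + f2 = d * k" using dd by blast
    have "d * k > 0" using fp k by simp
    then have "k > 0" using d2 by (simp add: a_d_c1_c2_f1_f2_def zero_less_mult_iff)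
    moreover have "d * k < d * 2" using l1 l2 k by simp
    then have "k < 2" using d2 by (simp add: a_d_c1_c2_f1_f2_def)
    ultimately have "k = 1" by simp
    then show ?thesis using k by simp
  qed
  moreover have "c1 + c2 = a"
  proof -
    have "a * d = d * (c1 + c2)" using \<open>a * (f1 + f2) = d * (c1 + c2)\<close> \<open>f1 + f2 = d\<close> by simp
    then show ?thesis using d2 by (simp add: a_d_c1_c2_f1_f2_def mult.commute)
  qed
  ultimately have f2e: "f2 = d - f1" and c2e: "c2 = a - c1" by linarith+
  have "c1 * f2 - f1 * c2 = c1 * (d - f1) - f1 * (a - c1)" by (simp only: f2e c2e)
  also have "\<dots> = - (a * f1 - d * c1)" by (simp add: algebra_simps)
  finally have "c1 * f2 - f1 * c2 = - (a * f1 - d * c1)" .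
  then have "\<bar>c1 * f2 - f1 * c2\<bar> = 1" using s1 by simp
  then have "farey_adj (Some z1) (Some z2)" by (simp add: fadj_SS a_d_c1_c2_f1_f2_def)
  then show ?thesis using opp by (simp add: a_d_c1_c2_f1_f2_def)
qed

definition topv :: "rat option set \<Rightarrow> rat option \<Rightarrow> bool" where
  "topv S v \<longleftrightarrow> v \<in> S \<and> (\<forall>x\<in>S. \<forall>y\<in>S. farey_adj v x \<longrightarrow> farey_adj v y \<longrightarrow> x \<noteq> y \<longrightarrow> farey_adj x y) \<and>
     (\<forall>x\<in>S. \<forall>y\<in>S. \<forall>z\<in>S. farey_adj v x \<longrightarrow> farey_adj v y \<longrightarrow> farey_adj v z \<longrightarrow> x = y \<or> y = z \<or> x = z)"

lemma topv_small:
  assumes "v \<in> S" "\<And>x. x \<in> S \<Longrightarrow> farey_adj v x \<Longrightarrow> x \<in> {a, b}" "a \<noteq> b \<Longrightarrow> farey_adj a b"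
  shows "topv S v"
  unfolding topv_def
proof (intro conjI ballI impI)
  show "v \<in> S" by fact
next
  fix x y assume "x \<in> S" "y \<in> S" "farey_adj v x" "farey_adj v y" "x \<noteq> y"
  then have "x \<in> {a, b}" "y \<in> {a, b}" using assms(2) by auto
  then show "farey_adj x y" using \<open>x \<noteq> y\<close> assms(3) fadj_sym by auto
next
  fix x y z assume "x \<in> S" "y \<in> S" "z \<in> S" "farey_adj v x" "farey_adj v y" "farey_adj v z"
  then have "x \<in> {a, b}" "y \<in> {a, b}" "z \<in> {a, b}" using assms(2) by auto
  then show "x = y \<or> y = z \<or> x = z" by auto
qed

lemma top_exists:
  assumes fin: "finite S" and ne: "S \<noteq> {}"
  shows "\<exists>v. topv S v"
proof -
  define T where "T = Some -` S"
  have finT: "finite T" unfolding T_def by (rule finite_vimageI[OF fin]) simp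
  show ?thesis
  proof (cases "T = {}")
    case True
    have "x = None" if "x \<in> S" for x
    proof (cases x)
      case (Some q)
      then have "q \<in> T" using that by (simp add: T_def)
      then show ?thesis using True by simp
    qed simp
    then have "S = {None}" using ne by blast
    then have "topv S None" by (intro topv_small[of _ _ None None]) (auto simp: fadj_NN)
    then show ?thesis by blast
  next
    case False
    define D where "D = Max (de ` T)"
    have Dge: "de z \<le> D" if "z \<in> T" for z using finT that by (simp add: D_def)
    have "D \<in> de ` T" unfolding D_def using finT False by (intro Max_in) auto
    then obtain q where q: "q \<in> T" "de q = D" by (metis imageE)
    show ?thesis
    proof (cases "D \<ge> 2")
      case True
      define \<sigma> where "\<sigma> z = nu q * de z - de q * nu z" for z
      have nb: "\<exists>z. x = Some z \<and> z \<in> T" if "x \<in> S" "farey_adj (Some q) x" for x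
      proof (cases x)
        case None then show ?thesis using that True q by (simp add: fadj_SN)
      next
        case (Some z) then show ?thesis using that by (simp add: T_def)
      qed
      have opp: "\<sigma> a = - \<sigma> b" if "a \<in> T" "b \<in> T" "farey_adj (Some q) (Some a)"
          "farey_adj (Some q) (Some b)" "a \<noteq> b" for a b
      proof -
        have "de a \<le> de q" "de b \<le> de q" "2 \<le> de q" using Dge that q True by auto
        then show ?thesis using nbr_sign[of q a b] that unfolding \<sigma>_def by blast
      qed
      have "topv S (Some q)" unfolding topv_def
      proof (intro conjI ballI impI)
        show "Some q \<in> S" using q by (simp add: T_def)
      next
        fix x y assume h: "x \<in> S" "y \<in> S" "farey_adj (Some q) x" "farey_adj (Some q) y" "x \<noteq> y"
        obtain z1 z2 where z: "x = Some z1" "y = Some z2" "z1 \<in> T" "z2 \<in> T" using nb h by metis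
        show "farey_adj x y" using nbr_sign[of q z1 z2] h z Dge q True by auto
      next
        fix x y w assume h: "x \<in> S" "y \<in> S" "w \<in> S" "farey_adj (Some q) x" "farey_adj (Some q) y" "farey_adj (Some q) w"
        obtain z1 z2 z3 where z: "x = Some z1" "y = Some z2" "w = Some z3" "z1 \<in> T" "z2 \<in> T" "z3 \<in> T"
          using nb h by metis
        show "x = y \<or> y = w \<or> x = w"
        proof (rule ccontr)
          assume "\<not> ?thesis"
          then have d: "z1 \<noteq> z2" "z2 \<noteq> z3" "z1 \<noteq> z3" using z by auto
          have a: "farey_adj (Some q) (Some z1)" "farey_adj (Some q) (Some z2)" "farey_adj (Some q) (Some z3)"
            using h(4,5,6) z(1,2,3) by simp_all
          have "\<sigma> z1 = - \<sigma> z2" by (rule opp[OF z(4) z(5) a(1) a(2) d(1)])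
          moreover have "\<sigma> z2 = - \<sigma> z3" by (rule opp[OF z(5) z(6) a(2) a(3) d(2)])
          moreover have "\<sigma> z1 = - \<sigma> z3" by (rule opp[OF z(4) z(6) a(1) a(3) d(3)])
          ultimately have "\<sigma> z1 = 0" by linarith
          moreover have "\<bar>\<sigma> z1\<bar> = 1" using h(4) z by (simp add: fadj_SS \<sigma>_def)
          ultimately show False by simp
        qed
      qed
      then show ?thesis by blast
    next
      case False
      have de1: "de z = 1" if "z \<in> T" for z using Dge[OF that] False de_pos[of z] by simp
      define n where "n = Max T"
      have nT: "n \<in> T" using Max_in finT \<open>T \<noteq> {}\<close> by (simp add: n_def)
      have nge: "z \<le> n" if "z \<in> T" for z using finT that by (simp add: n_def)
      define m :: rat where "m = of_int (nu n - 1)"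
      have dm: "de m = 1" "nu m = nu n - 1"
        unfolding m_def nu_def de_def by (simp_all only: quotient_of_rat_of_int fst_conv snd_conv)
      have "topv S (Some n)"
      proof (rule topv_small[of _ _ None "Some m"])
        show "Some n \<in> S" using nT by (simp add: T_def)
      next
        fix x assume x: "x \<in> S" "farey_adj (Some n) x"
        show "x \<in> {None, Some m}"
        proof (cases x)
          case None then show ?thesis by simp
        next
          case (Some z)
          then have zT: "z \<in> T" using x by (simp add: T_def)
          have "\<bar>nu n - nu z\<bar> = 1" using x Some de1[OF zT] de1[OF nT] by (simp add: fadj_SS)
          moreover have "nu z \<le> nu n"
          proof -
            have "z \<le> n" using nge[OF zT] .
            then have "(of_int (nu z) :: rat) \<le> of_int (nu n)"
              using de1_eq[OF de1[OF zT]] de1_eq[OF de1[OF nT]] by metis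
            then show ?thesis by simp
          qed
          ultimately have "nu z = nu n - 1" by linarith
          then have "z = m" using de1_eq[OF de1[OF zT]] by (simp add: m_def)
          then show ?thesis using Some by simp
        qed
      next
        show "farey_adj None (Some m)" using dm by (simp add: fadj_NS)
      qed
      then show ?thesis by blast
    qed
  qed
qed

definition rs :: "rat option set \<Rightarrow> rat option \<Rightarrow> rat option \<Rightarrow> bool" where
  "rs S a b \<longleftrightarrow> farey_adj a b \<and> a \<in> S \<and> b \<in> S"

definition conn :: "rat option set \<Rightarrow> bool" where
  "conn S \<longleftrightarrow> (\<forall>u\<in>S. \<forall>v\<in>S. (rs S)\<^sup>*\<^sup>* u v)"

definition four :: "'a set \<Rightarrow> bool" where
  "four K \<longleftrightarrow> (\<exists>a b c d. K = {a, b, c, d} \<and> distinct [a, b, c, d])"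

definition k4m :: "rat option set \<Rightarrow> ('a \<Rightarrow> rat option set) \<Rightarrow> 'a set \<Rightarrow> bool" where
  "k4m S B K \<longleftrightarrow> four K \<and> (\<forall>h\<in>K. B h \<noteq> {} \<and> B h \<subseteq> S \<and> conn (B h)) \<and>
     (\<forall>h\<in>K. \<forall>h'\<in>K. h \<noteq> h' \<longrightarrow> B h \<inter> B h' = {} \<and> (\<exists>x\<in>B h. \<exists>y\<in>B h'. farey_adj x y))"

lemma four_others: "four K \<Longrightarrow> h0 \<in> K \<Longrightarrow> \<exists>x y z. x \<in> K \<and> y \<in> K \<and> z \<in> K \<and> distinct [h0, x, y, z]"
proof -
  assume f: "four K" and h: "h0 \<in> K"
  obtain a b c d where K: "K = {a, b, c, d}" "distinct [a, b, c, d]" using f unfolding four_def by blast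
  have m: "a \<in> K" "b \<in> K" "c \<in> K" "d \<in> K" using K(1) by simp_all
  have n: "a \<noteq> b" "a \<noteq> c" "a \<noteq> d" "b \<noteq> c" "b \<noteq> d" "c \<noteq> d" using K(2) by simp_all
  have n': "b \<noteq> a" "c \<noteq> a" "d \<noteq> a" "c \<noteq> b" "d \<noteq> b" "d \<noteq> c" using n by simp_all
  from h K(1) consider "h0 = a" | "h0 = b" | "h0 = c" | "h0 = d" by blast
  then show ?thesis
  proof cases
    case 1 then show ?thesis using m n n' by (intro exI[of _ b] exI[of _ c] exI[of _ d]) simp
  next
    case 2 then show ?thesis using m n n' by (intro exI[of _ a] exI[of _ c] exI[of _ d]) simp
  next
    case 3 then show ?thesis using m n n' by (intro exI[of _ a] exI[of _ b] exI[of _ d]) simp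
  next
    case 4 then show ?thesis using m n n' by (intro exI[of _ a] exI[of _ b] exI[of _ c]) simp
  qed
qed

lemma four_fin: "four K \<Longrightarrow> finite K \<and> K \<noteq> {}"
  unfolding four_def by auto

lemma rs_mono: "S \<subseteq> S' \<Longrightarrow> (rs S)\<^sup>*\<^sup>* a b \<Longrightarrow> (rs S')\<^sup>*\<^sup>* a b"
  by (rule rtranclp_mono[THEN predicate2D, rotated]) (auto simp: rs_def)

lemma rs_sym: "(rs S)\<^sup>*\<^sup>* a b \<Longrightarrow> (rs S)\<^sup>*\<^sup>* b a"
  by (rule rtr_sym[of "rs S"]) (auto simp: rs_def fadj_sym)

lemma conn_remove:
  assumes c: "conn A" and vA: "v \<in> A"
    and tp: "\<And>x y. x \<in> A \<Longrightarrow> y \<in> A \<Longrightarrow> farey_adj v x \<Longrightarrow> farey_adj v y \<Longrightarrow> x \<noteq> y \<Longrightarrow> farey_adj x y"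
    and x0: "x0 \<in> A" "x0 \<noteq> v"
  shows "conn (A - {v}) \<and> (\<exists>n\<in>A - {v}. farey_adj n v)"
proof -
  define A' where "A' = A - {v}"
  have inv: "(z \<noteq> v \<longrightarrow> (rs A')\<^sup>*\<^sup>* u z) \<and> (z = v \<longrightarrow> (\<exists>n\<in>A'. farey_adj n v \<and> (rs A')\<^sup>*\<^sup>* u n))"
    if u: "u \<in> A'" and r: "(rs A)\<^sup>*\<^sup>* u z" for u z
    using r
  proof (induction rule: rtranclp_induct)
    case base then show ?case using u by (auto simp: A'_def)
  next
    case (step z z')
    have zz: "farey_adj z z'" "z \<in> A" "z' \<in> A" using step(2) by (auto simp: rs_def)
    show ?case
    proof (cases "z = v")
      case False
      then have ru: "(rs A')\<^sup>*\<^sup>* u z" using step(3) by blast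
      show ?thesis
      proof (cases "z' = v")
        case True
        then show ?thesis using False ru zz by (auto simp: A'_def)
      next
        case False
        have "rs A' z z'" using zz False \<open>z \<noteq> v\<close> by (auto simp: rs_def A'_def)
        then show ?thesis using ru False by auto
      qed
    next
      case True
      then have z'v: "z' \<noteq> v" using zz fadj_irrefl by auto
      obtain n where n: "n \<in> A'" "farey_adj n v" "(rs A')\<^sup>*\<^sup>* u n" using step(3) True by blast
      have "(rs A')\<^sup>*\<^sup>* u z'"
      proof (cases "n = z'")
        case True then show ?thesis using n by simp
      next
        case False
        have "farey_adj n z'"
          using tp[of n z'] n zz True False fadj_sym by (auto simp: A'_def)
        then have "rs A' n z'" using n z'v zz by (auto simp: rs_def A'_def)
        then show ?thesis using n by auto
      qed
      then show ?thesis using z'v by simp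
    qed
  qed
  have "conn A'"
    unfolding conn_def
  proof (intro ballI)
    fix a b assume ab: "a \<in> A'" "b \<in> A'"
    have "(rs A)\<^sup>*\<^sup>* a b" using c ab by (auto simp: conn_def A'_def)
    then show "(rs A')\<^sup>*\<^sup>* a b" using inv[OF ab(1)] ab(2) by (auto simp: A'_def)
  qed
  moreover have "x0 \<in> A'" using x0 by (simp add: A'_def)
  then have "\<exists>n\<in>A'. farey_adj n v" using inv[of x0 v] c vA x0 by (auto simp: conn_def)
  ultimately show ?thesis by (simp add: A'_def)
qed

lemma reduce:
  assumes m: "k4m S B K" and t: "topv S v"
  shows "k4m (S - {v}) (\<lambda>h. B h - {v}) K"
proof -
  have fourK: "four K" using m by (simp add: k4m_def)
  have Bh: "\<And>h. h \<in> K \<Longrightarrow> B h \<noteq> {} \<and> B h \<subseteq> S \<and> conn (B h)" using m by (simp add: k4m_def)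
  have Bp: "\<And>h h'. h \<in> K \<Longrightarrow> h' \<in> K \<Longrightarrow> h \<noteq> h' \<Longrightarrow> B h \<inter> B h' = {} \<and> (\<exists>x\<in>B h. \<exists>y\<in>B h'. farey_adj x y)"
    using m by (simp add: k4m_def)
  have vS: "v \<in> S" and tp2: "\<And>x y. x \<in> S \<Longrightarrow> y \<in> S \<Longrightarrow> farey_adj v x \<Longrightarrow> farey_adj v y \<Longrightarrow> x \<noteq> y \<Longrightarrow> farey_adj x y"
    and tp3: "\<And>x y z. x \<in> S \<Longrightarrow> y \<in> S \<Longrightarrow> z \<in> S \<Longrightarrow> farey_adj v x \<Longrightarrow> farey_adj v y \<Longrightarrow> farey_adj v z \<Longrightarrow> x = y \<or> y = z \<or> x = z"
    using t unfolding topv_def by blast+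
  have notsingle: "\<exists>x0. x0 \<in> B h \<and> x0 \<noteq> v" if h: "h \<in> K" "v \<in> B h" for h
  proof (rule ccontr)
    assume "\<not> ?thesis"
    then have single: "\<forall>x\<in>B h. x = v" by blast
    obtain x y z where xyz: "x \<in> K" "y \<in> K" "z \<in> K" "distinct [h, x, y, z]" using four_others[OF fourK h(1)] by blast
    have nb: "\<exists>b\<in>B k. farey_adj v b" if k: "k \<in> K" "k \<noteq> h" for k
    proof -
      obtain a b where "a \<in> B h" "b \<in> B k" "farey_adj a b" using Bp[OF h(1) k(1)] k(2) by metis
      then show ?thesis using single by auto
    qed
    obtain bx by' bz where b: "bx \<in> B x" "by' \<in> B y" "bz \<in> B z" "farey_adj v bx" "farey_adj v by'" "farey_adj v bz"
      using nb xyz by (metis distinct_length_2_or_more distinct.simps(2) list.set_intros(1,2))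
    have "bx \<noteq> by'" "by' \<noteq> bz" "bx \<noteq> bz" using Bp b xyz by auto
    moreover have "bx \<in> S" "by' \<in> S" "bz \<in> S" using Bh b xyz by auto
    ultimately show False using tp3 b by blast
  qed
  have nbr: "\<exists>n\<in>B h - {v}. farey_adj n v" and cn: "conn (B h - {v})" if h: "h \<in> K" "v \<in> B h" for h
  proof -
    obtain x0 where "x0 \<in> B h" "x0 \<noteq> v" using notsingle[OF h] by blast
    moreover have "\<And>x y. x \<in> B h \<Longrightarrow> y \<in> B h \<Longrightarrow> farey_adj v x \<Longrightarrow> farey_adj v y \<Longrightarrow> x \<noteq> y \<Longrightarrow> farey_adj x y"
      using tp2 Bh[OF h(1)] by blast
    ultimately have "conn (B h - {v}) \<and> (\<exists>n\<in>B h - {v}. farey_adj n v)"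
      using conn_remove[OF conjunct2[OF conjunct2[OF Bh[OF h(1)]]] h(2)] by blast
    then show "\<exists>n\<in>B h - {v}. farey_adj n v" "conn (B h - {v})" by auto
  qed
  show ?thesis
    unfolding k4m_def
  proof (intro conjI ballI impI)
    show "four K" by fact
  next
    fix h assume h: "h \<in> K"
    show "B h - {v} \<noteq> {}"
    proof (cases "v \<in> B h")
      case True then show ?thesis using notsingle[OF h] by blast
    next
      case False then show ?thesis using Bh[OF h] by simp
    qed
    show "B h - {v} \<subseteq> S - {v}" using Bh[OF h] by auto
    show "conn (B h - {v})"
    proof (cases "v \<in> B h")
      case True then show ?thesis using cn[OF h] by blast
    next
      case False then show ?thesis using Bh[OF h] by simp
    qed
  next
    fix h h' assume hh: "h \<in> K" "h' \<in> K" "h \<noteq> h'"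
    show "(B h - {v}) \<inter> (B h' - {v}) = {}" using Bp[OF hh] by auto
    obtain x y where xy: "x \<in> B h" "y \<in> B h'" "farey_adj x y" using Bp[OF hh] by metis
    have dj: "B h \<inter> B h' = {}" using Bp[OF hh] by blast
    show "\<exists>x\<in>B h - {v}. \<exists>y\<in>B h' - {v}. farey_adj x y"
    proof (cases "x = v")
      case True
      then have yv: "y \<noteq> v" using xy dj by auto
      obtain n where n: "n \<in> B h - {v}" "farey_adj n v" using nbr[OF hh(1)] xy True by blast
      have "n \<noteq> y" using n xy dj by auto
      moreover have "n \<in> S" "y \<in> S" using n xy Bh hh by auto
      ultimately have "farey_adj n y" using tp2[of n y] n xy True fadj_sym by blast
      then show ?thesis using n xy yv by blast
    next
      case False
      show ?thesis
      proof (cases "y = v")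
        case True
        obtain n where n: "n \<in> B h' - {v}" "farey_adj n v" using nbr[OF hh(2)] xy True by blast
        have "n \<noteq> x" using n xy dj by auto
        moreover have "n \<in> S" "x \<in> S" using n xy Bh hh by auto
        ultimately have "farey_adj x n" using tp2[of x n] n xy True fadj_sym by blast
        then show ?thesis using n xy False by blast
      next
        case yF: False
        then show ?thesis using xy False by blast
      qed
    qed
  qed
qed

lemma no_k4_fin: "finite S \<Longrightarrow> \<not> k4m S B K"
proof (induction "card S" arbitrary: S B rule: less_induct)
  case less
  show ?case
  proof
    assume m: "k4m S B K"
    show False
    proof (cases "S = {}")
      case True
      have "K \<noteq> {}" using m four_fin unfolding k4m_def by blast
      then obtain h where "h \<in> K" by blast
      then show False using m True by (auto simp: k4m_def)
    next
      case False
      obtain v where t: "topv S v" using top_exists[OF less.prems False] by blast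
      then have "v \<in> S" by (simp add: topv_def)
      then have "card S > 0" using less.prems by (auto simp: card_gt_0_iff)
      then have "card (S - {v}) < card S" using less.prems \<open>v \<in> S\<close> by (simp add: card_Diff_singleton)
      moreover have "finite (S - {v})" using less.prems by simp
      ultimately show False using less.hyps reduce[OF m t] by blast
    qed
  qed
qed

lemma walk_reach: "successively farey_adj p \<Longrightarrow> z \<in> set p \<Longrightarrow> (rs (set p))\<^sup>*\<^sup>* (hd p) z"
proof (induction p)
  case Nil then show ?case by simp
next
  case (Cons x xs)
  show ?case
  proof (cases "z = x")
    case True then show ?thesis by simp
  next
    case False
    then have z: "z \<in> set xs" using Cons.prems by simp
    then have ne: "xs \<noteq> []" by auto
    have "successively farey_adj xs" using Cons.prems(1) by (auto simp: successively_Cons)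
    then have "(rs (set xs))\<^sup>*\<^sup>* (hd xs) z" using Cons.IH z by blast
    then have r: "(rs (set (x # xs)))\<^sup>*\<^sup>* (hd xs) z" by (rule rs_mono[rotated]) auto
    have "farey_adj x (hd xs)" using Cons.prems(1) ne by (auto simp: successively_Cons)
    then have "rs (set (x # xs)) x (hd xs)" using ne by (auto simp: rs_def)
    then show ?thesis using r by (simp add: converse_rtranclp_into_rtranclp)
  qed
qed

lemma conn_walk: "successively farey_adj p \<Longrightarrow> p \<noteq> [] \<Longrightarrow> conn (set p)"
  unfolding conn_def
proof (intro ballI)
  fix u v assume p: "successively farey_adj p" "p \<noteq> []" and uv: "u \<in> set p" "v \<in> set p"
  have "(rs (set p))\<^sup>*\<^sup>* (hd p) u" "(rs (set p))\<^sup>*\<^sup>* (hd p) v" using walk_reach p uv by blast+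
  then show "(rs (set p))\<^sup>*\<^sup>* u v" using rs_sym by (meson rtranclp_trans)
qed

lemma conn_union:
  assumes "conn A" "conn B" "y \<in> A" "y \<in> B"
  shows "conn (A \<union> B)"
  unfolding conn_def
proof (intro ballI)
  fix u v assume uv: "u \<in> A \<union> B" "v \<in> A \<union> B"
  have cA: "\<And>a b. a \<in> A \<Longrightarrow> b \<in> A \<Longrightarrow> (rs (A \<union> B))\<^sup>*\<^sup>* a b"
    using assms(1) rs_mono[of A "A \<union> B"] unfolding conn_def by blast
  have cB: "\<And>a b. a \<in> B \<Longrightarrow> b \<in> B \<Longrightarrow> (rs (A \<union> B))\<^sup>*\<^sup>* a b"
    using assms(2) rs_mono[of B "A \<union> B"] unfolding conn_def by blast
  have r1: "(rs (A \<union> B))\<^sup>*\<^sup>* u y" using uv cA cB assms(3,4) by blast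
  have r2: "(rs (A \<union> B))\<^sup>*\<^sup>* y v" using uv cA cB assms(3,4) by blast
  show "(rs (A \<union> B))\<^sup>*\<^sup>* u v" using r1 r2 by simp
qed

lemma rs_walk: "(rs A)\<^sup>*\<^sup>* a b \<Longrightarrow> a \<in> A \<Longrightarrow> \<exists>p. p \<noteq> [] \<and> hd p = a \<and> last p = b \<and> set p \<subseteq> A \<and> successively farey_adj p"
proof -
  assume r: "(rs A)\<^sup>*\<^sup>* a b" and a: "a \<in> A"
  have "rs A x y \<Longrightarrow> x \<in> A \<and> y \<in> A" for x y by (simp add: rs_def)
  then obtain p where p: "walk_in A (rs A) p" "hd p = a" "last p = b" using rtr_walk[OF _ a r] by blast
  then have "successively farey_adj p" unfolding walk_succ by (auto elim: successively_mono simp: rs_def)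
  then show ?thesis using p by (auto simp: walk_succ)
qed

lemma fin_conn:
  assumes c: "conn A" and fX: "finite X" and ne: "X \<noteq> {}" and XA: "X \<subseteq> A"
  shows "\<exists>A'. finite A' \<and> X \<subseteq> A' \<and> A' \<subseteq> A \<and> conn A'"
  using fX ne XA
proof (induction rule: finite_ne_induct)
  case (singleton x)
  have "conn {x}" by (simp add: conn_def)
  then show ?case using singleton by blast
next
  case (insert x F)
  obtain A' where A': "finite A'" "F \<subseteq> A'" "A' \<subseteq> A" "conn A'" using insert by auto
  obtain y where y: "y \<in> F" using insert(2) by blast
  have "y \<in> A" "x \<in> A" using insert y by auto
  then have "(rs A)\<^sup>*\<^sup>* y x" using c by (simp add: conn_def)
  then obtain p where p: "p \<noteq> []" "hd p = y" "last p = x" "set p \<subseteq> A" "successively farey_adj p"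
    using rs_walk \<open>y \<in> A\<close> by blast
  have cp: "conn (set p)" using conn_walk p by blast
  have "y \<in> set p" "x \<in> set p" using p by (auto intro: hd_in_set last_in_set)
  then have "conn (A' \<union> set p)" using conn_union[OF A'(4) cp] A'(2) y by blast
  moreover have "finite (A' \<union> set p)" using A' by simp
  moreover have "insert x F \<subseteq> A' \<union> set p" using A'(2) \<open>x \<in> set p\<close> by auto
  moreover have "A' \<union> set p \<subseteq> A" using A' p by auto
  ultimately show ?case by blast
qed

lemma conn_of_connected: "connected_on S farey_adj \<Longrightarrow> conn S"
  unfolding conn_def connected_on_def
proof (intro ballI)
  fix u v assume h: "\<forall>u\<in>S. \<forall>v\<in>S. \<exists>p. walk_in S farey_adj p \<and> hd p = u \<and> last p = v" "u \<in> S" "v \<in> S"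
  then obtain p where p: "walk_in S farey_adj p" "hd p = u" "last p = v" by blast
  then have "successively (rs S) p" unfolding walk_succ
    by (auto intro!: successively_mono[of farey_adj p] simp: rs_def)
  then have "(rs S)\<^sup>*\<^sup>* (hd p) (last p)" using succ_rtr p(1) by (auto simp: walk_succ)
  then show "(rs S)\<^sup>*\<^sup>* u v" using p by simp
qed

lemma fin_reduce:
  assumes m: "k4m UNIV B K"
  shows "\<exists>S B'. finite S \<and> k4m S B' K"
proof -
  have fourK: "four K" using m by (simp add: k4m_def)
  have Bh: "\<And>h. h \<in> K \<Longrightarrow> B h \<noteq> {} \<and> conn (B h)" using m by (simp add: k4m_def)
  have Bp: "\<And>h h'. h \<in> K \<Longrightarrow> h' \<in> K \<Longrightarrow> h \<noteq> h' \<Longrightarrow> B h \<inter> B h' = {} \<and> (\<exists>x\<in>B h. \<exists>y\<in>B h'. farey_adj x y)"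
    using m by (simp add: k4m_def)
  have "\<forall>pr. \<exists>xy. (fst pr \<in> K \<and> snd pr \<in> K \<and> fst pr \<noteq> snd pr) \<longrightarrow>
      (fst xy \<in> B (fst pr) \<and> snd xy \<in> B (snd pr) \<and> farey_adj (fst xy) (snd xy))"
  proof
    fix pr :: "'a \<times> 'a"
    show "\<exists>xy. (fst pr \<in> K \<and> snd pr \<in> K \<and> fst pr \<noteq> snd pr) \<longrightarrow>
      (fst xy \<in> B (fst pr) \<and> snd xy \<in> B (snd pr) \<and> farey_adj (fst xy) (snd xy))"
    proof (cases "fst pr \<in> K \<and> snd pr \<in> K \<and> fst pr \<noteq> snd pr")
      case True
      then obtain x y where "x \<in> B (fst pr)" "y \<in> B (snd pr)" "farey_adj x y" using Bp by metis
      then show ?thesis by (intro exI[of _ "(x, y)"]) simp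
    next
      case False then show ?thesis by blast
    qed
  qed
  then have "\<exists>e. \<forall>pr. (fst pr \<in> K \<and> snd pr \<in> K \<and> fst pr \<noteq> snd pr) \<longrightarrow>
      (fst (e pr) \<in> B (fst pr) \<and> snd (e pr) \<in> B (snd pr) \<and> farey_adj (fst (e pr)) (snd (e pr)))"
    by (rule choice)
  then obtain e where e0: "\<forall>pr. (fst pr \<in> K \<and> snd pr \<in> K \<and> fst pr \<noteq> snd pr) \<longrightarrow>
      (fst (e pr) \<in> B (fst pr) \<and> snd (e pr) \<in> B (snd pr) \<and> farey_adj (fst (e pr)) (snd (e pr)))"
    by (elim exE)
  have e: "fst (e (h, h')) \<in> B h \<and> snd (e (h, h')) \<in> B h' \<and> farey_adj (fst (e (h, h'))) (snd (e (h, h')))"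
    if "h \<in> K" "h' \<in> K" "h \<noteq> h'" for h h'
    using e0[rule_format, of "(h, h')"] that by simp
  define X where "X h = (\<lambda>h'. fst (e (h, h'))) ` (K - {h}) \<union> (\<lambda>h'. snd (e (h', h))) ` (K - {h})" for h
  have finK: "finite K" using four_fin[OF fourK] by simp
  have Xp: "finite (X h) \<and> X h \<noteq> {} \<and> X h \<subseteq> B h" if h: "h \<in> K" for h
  proof (intro conjI)
    show "finite (X h)" using finK by (simp add: X_def)
    obtain x where "x \<in> K" "x \<noteq> h" using four_others[OF fourK h] by auto
    then show "X h \<noteq> {}" by (auto simp: X_def)
    show "X h \<subseteq> B h" using e h by (auto simp: X_def)
  qed
  have ex: "\<forall>h\<in>K. \<exists>A'. finite A' \<and> X h \<subseteq> A' \<and> A' \<subseteq> B h \<and> conn A'"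
  proof
    fix h assume h: "h \<in> K"
    have "conn (B h)" using Bh[OF h] by simp
    moreover have "finite (X h)" "X h \<noteq> {}" "X h \<subseteq> B h" using Xp[OF h] by auto
    ultimately show "\<exists>A'. finite A' \<and> X h \<subseteq> A' \<and> A' \<subseteq> B h \<and> conn A'" by (rule fin_conn)
  qed
  have "\<exists>B'. \<forall>h\<in>K. finite (B' h) \<and> X h \<subseteq> B' h \<and> B' h \<subseteq> B h \<and> conn (B' h)"
    using bchoice[OF ex] .
  then obtain B' where B'0: "\<forall>h\<in>K. finite (B' h) \<and> X h \<subseteq> B' h \<and> B' h \<subseteq> B h \<and> conn (B' h)"
    by (elim exE)
  have B': "finite (B' h) \<and> X h \<subseteq> B' h \<and> B' h \<subseteq> B h \<and> conn (B' h)" if "h \<in> K" for h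
    using B'0 that by blast
  define S where "S = \<Union> (B' ` K)"
  have "finite S" using B' finK by (auto simp: S_def)
  moreover have "k4m S B' K"
    unfolding k4m_def
  proof (intro conjI ballI impI)
    show "four K" by fact
  next
    fix h assume h: "h \<in> K"
    show "B' h \<noteq> {}" using B'[OF h] Xp[OF h] by blast
    show "B' h \<subseteq> S" using h by (auto simp: S_def)
    show "conn (B' h)" using B'[OF h] by blast
  next
    fix h h' assume hh: "h \<in> K" "h' \<in> K" "h \<noteq> h'"
    show "B' h \<inter> B' h' = {}" using B'[OF hh(1)] B'[OF hh(2)] Bp[OF hh] by blast
    have "fst (e (h, h')) \<in> X h" using hh by (auto simp: X_def)
    moreover have "snd (e (h, h')) \<in> X h'" using hh by (auto simp: X_def)
    ultimately have "fst (e (h, h')) \<in> B' h" "snd (e (h, h')) \<in> B' h'" using B' hh by blast+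
    then show "\<exists>x\<in>B' h. \<exists>y\<in>B' h'. farey_adj x y" using e[OF hh] by blast
  qed
  ultimately show ?thesis by blast
qed

lemma fa_half: "farey_adj (Some 0) (Some (1/2))" "farey_adj (Some (1/2)) (Some 1)"
proof -
  have h: "nu (1/2) = 1" "de (1/2) = 2" using qo_mk[of 2 1] by simp_all
  show "farey_adj (Some 0) (Some (1/2))" using h by (simp add: fadj_SS nu_def de_def)
  show "farey_adj (Some (1/2)) (Some 1)" using h by (simp add: fadj_SS nu_def de_def)
qed

lemma not_minor: "\<not> is_minor VG EG (UNIV :: rat option set) farey_adj"
proof
  assume "is_minor VG EG (UNIV :: rat option set) farey_adj"
  then obtain B :: "nat \<Rightarrow> rat option set" where
    B1: "\<forall>h\<in>VG. B h \<noteq> {} \<and> B h \<subseteq> UNIV \<and> connected_on (B h) farey_adj" and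
    B2: "\<forall>h\<in>VG. \<forall>h'\<in>VG. h \<noteq> h' \<longrightarrow> B h \<inter> B h' = {}" and
    B3: "\<forall>h\<in>VG. \<forall>h'\<in>VG. EG h h' \<longrightarrow> (\<exists>x\<in>B h. \<exists>y\<in>B h'. farey_adj x y)"
    unfolding is_minor_def by blast
  define K where "K = {wv, fv (Some 0), fv (Some (1/2)), fv (Some 1)}"
  have KV: "K \<subseteq> VG" by (auto simp: K_def VG_def)
  have fourK: "four K" unfolding four_def K_def
    by (intro exI[of _ wv] exI[of _ "fv (Some 0)"] exI[of _ "fv (Some (1/2))"] exI[of _ "fv (Some 1)"]) simp
  have fa: "farey_adj (Some 0) (Some (1/2))" "farey_adj (Some (1/2)) (Some 1)" "farey_adj (Some 0) (Some 1)"
    using fa_half fadj01 by auto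
  have fa': "farey_adj (Some (1/2)) (Some 0)" "farey_adj (Some 1) (Some (1/2))" "farey_adj (Some 1) (Some 0)"
    using fa fadj_sym by blast+
  have EK: "EG h h'" if "h \<in> K" "h' \<in> K" "h \<noteq> h'" for h h'
  proof -
    have "\<exists>c\<in>NW. c * 2 = 1" using NW_has(2) by (intro bexI[of _ "1/2"]) auto
    then show ?thesis using that fa fa' NW_has unfolding K_def by auto
  qed
  have "k4m UNIV B K"
    unfolding k4m_def
  proof (intro conjI ballI impI)
    show "four K" by fact
  next
    fix h assume "h \<in> K"
    then have "h \<in> VG" using KV by auto
    then show "B h \<noteq> {}" "B h \<subseteq> UNIV" "conn (B h)" using B1 conn_of_connected by auto
  next
    fix h h' assume hh: "h \<in> K" "h' \<in> K" "h \<noteq> h'"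
    then have "h \<in> VG" "h' \<in> VG" using KV by auto
    then show "B h \<inter> B h' = {}" "\<exists>x\<in>B h. \<exists>y\<in>B h'. farey_adj x y" using B2 B3 EK[OF hh] hh(3) by auto
  qed
  then obtain S B' where "finite S" "k4m S B' K" using fin_reduce by blast
  then show False using no_k4_fin by blast
qed

definition PA :: "real \<Rightarrow> real \<Rightarrow> (real \<times> real) set" where
  "PA a b = {p. min a b \<le> fst p \<and> fst p \<le> max a b \<and> snd p = (fst p - a) * (b - fst p)}"

definition parab :: "real \<Rightarrow> real \<Rightarrow> real \<Rightarrow> real \<times> real" where
  "parab a b t = (a + t * (b - a), t * (1 - t) * (b - a)^2)"

lemma PA_sym: "PA a b = PA b a"
  unfolding PA_def by (auto simp: algebra_simps)

lemma parab_img: "path_image (parab a b) \<subseteq> PA a b"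
proof
  fix p assume "p \<in> path_image (parab a b)"
  then obtain t where t: "0 \<le> t" "t \<le> 1" "p = parab a b t" by (auto simp: path_image_def)
  have "min a b \<le> a + t * (b - a)"
  proof (cases "a \<le> b")
    case True then show ?thesis using t by (simp add: min_def)
  next
    case False
    then have "t * (b - a) \<ge> 1 * (b - a)" using t by (intro mult_right_mono_neg) auto
    then have "t * (b - a) \<ge> b - a" by simp
    then have "a + t * (b - a) \<ge> b" by linarith
    then show ?thesis using False by (simp add: min_def)
  qed
  moreover have "a + t * (b - a) \<le> max a b"
  proof (cases "a \<le> b")
    case True
    then have "t * (b - a) \<le> 1 * (b - a)" using t by (intro mult_right_mono) auto
    then have "t * (b - a) \<le> b - a" by simp
    then have "a + t * (b - a) \<le> b" by linarith
    then show ?thesis using True by (simp add: max_def)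
  next
    case False
    then have "t * (b - a) \<le> 0" using t by (simp add: mult_nonneg_nonpos)
    then show ?thesis using False by (simp add: max_def)
  qed
  moreover have "t * (1 - t) * (b - a)^2 = (a + t * (b - a) - a) * (b - (a + t * (b - a)))"
    by (simp add: algebra_simps power2_eq_square)
  ultimately show "p \<in> PA a b" using t by (simp add: PA_def parab_def)
qed

lemma PA_props:
  assumes "p \<in> PA lo hi" "lo < hi"
  shows "snd p \<ge> 0" "snd p = 0 \<Longrightarrow> p = (lo, 0) \<or> p = (hi, 0)" "snd p > 0 \<Longrightarrow> lo < fst p \<and> fst p < hi"
proof -
  have f: "lo \<le> fst p" "fst p \<le> hi" "snd p = (fst p - lo) * (hi - fst p)" using assms by (auto simp: PA_def)
  show "snd p \<ge> 0" using f by simp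
  show "snd p = 0 \<Longrightarrow> p = (lo, 0) \<or> p = (hi, 0)" using f by (cases p) auto
  show "snd p > 0 \<Longrightarrow> lo < fst p \<and> fst p < hi" using f by (auto simp: less_le)
qed

lemma parab_arc: "a \<noteq> b \<Longrightarrow> arc (parab a b)"
  unfolding arc_def path_def parab_def
proof (intro conjI)
  show "continuous_on {0..1} (\<lambda>t. (a + t * (b - a), t * (1 - t) * (b - a)^2))"
    by (intro continuous_intros)
  assume "a \<noteq> b"
  then show "inj_on (\<lambda>t. (a + t * (b - a), t * (1 - t) * (b - a)^2)) {0..1}"
    by (auto simp: inj_on_def)
qed

lemma parab_ends: "pathstart (parab a b) = (a, 0)" "pathfinish (parab a b) = (b, 0)"
  by (simp_all add: pathstart_def pathfinish_def parab_def)

lemma strict_nest: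
  fixes lo1 hi1 lo2 hi2 s :: real
  assumes "lo1 \<le> lo2" "hi2 \<le> hi1" "lo1 < lo2 \<or> hi2 < hi1" "lo2 < s" "s < hi2"
  shows "(s - lo2) * (hi2 - s) < (s - lo1) * (hi1 - s)"
proof -
  have a: "0 < s - lo2" "s - lo2 \<le> s - lo1" "0 < hi2 - s" "hi2 - s \<le> hi1 - s" using assms by auto
  show ?thesis
  proof (cases "lo1 < lo2")
    case True
    then have "s - lo2 < s - lo1" by simp
    then have "(s - lo2) * (hi2 - s) < (s - lo1) * (hi2 - s)" using a by simp
    also have "\<dots> \<le> (s - lo1) * (hi1 - s)" using a by (intro mult_left_mono) auto
    finally show ?thesis .
  next
    case False
    then have "hi2 - s < hi1 - s" using assms by simp
    then have "(s - lo2) * (hi2 - s) < (s - lo2) * (hi1 - s)" using a by simp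
    also have "\<dots> \<le> (s - lo1) * (hi1 - s)" using a by (intro mult_right_mono) auto
    finally show ?thesis .
  qed
qed

lemma PA_PA:
  assumes p: "p \<in> PA lo1 hi1" "p \<in> PA lo2 hi2" and lh: "lo1 < hi1" "lo2 < hi2"
    and ne: "(lo1, hi1) \<noteq> (lo2, hi2)"
    and nc1: "\<not> (lo1 < lo2 \<and> lo2 < hi1 \<and> hi1 < hi2)"
    and nc2: "\<not> (lo2 < lo1 \<and> lo1 < hi2 \<and> hi2 < hi1)"
  shows "p = (lo1, 0) \<or> p = (hi1, 0)"
proof (cases "snd p = 0")
  case True then show ?thesis using PA_props[OF p(1) lh(1)] by simp
next
  case False
  then have pos: "snd p > 0" using PA_props(1)[OF p(1) lh(1)] by simp
  define s where "s = fst p"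
  have i1: "lo1 < s" "s < hi1" using PA_props(3)[OF p(1) lh(1) pos] by (auto simp: s_def)
  have i2: "lo2 < s" "s < hi2" using PA_props(3)[OF p(2) lh(2) pos] by (auto simp: s_def)
  have e: "(s - lo1) * (hi1 - s) = (s - lo2) * (hi2 - s)" using p by (simp add: PA_def s_def)
  consider "lo1 \<le> lo2 \<and> hi2 \<le> hi1" | "lo2 \<le> lo1 \<and> hi1 \<le> hi2" using nc1 nc2 i1 i2 by linarith
  then show ?thesis
  proof cases
    case 1
    then have "lo1 < lo2 \<or> hi2 < hi1" using ne by auto
    then show ?thesis using strict_nest[of lo1 lo2 hi2 hi1 s] 1 i2 e by simp
  next
    case 2
    then have "lo2 < lo1 \<or> hi1 < hi2" using ne by auto
    then show ?thesis using strict_nest[of lo2 lo1 hi1 hi2 s] 2 i1 e by simp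
  qed
qed

lemma seg2:
  assumes "p \<in> closed_segment (0, -1) (n, 0 :: real)"
  shows "\<exists>t::real. 0 \<le> t \<and> t \<le> 1 \<and> p = (t * n, t - 1)"
proof -
  obtain u where u: "0 \<le> u" "u \<le> 1" "p = (1 - u) *\<^sub>R (0, -1) + u *\<^sub>R (n, 0)"
    using assms by (auto simp: in_segment)
  then show ?thesis by (intro exI[of _ u]) (auto simp: algebra_simps)
qed

lemma seg3:
  assumes "p \<in> closed_segment (1/2, -1/4) (c, 0 :: real)"
  shows "\<exists>s::real. 0 \<le> s \<and> s \<le> 1 \<and> p = ((1 - s) / 2 + s * c, - (1 - s) / 4)"
proof -
  obtain u where u: "0 \<le> u" "u \<le> 1" "p = (1 - u) *\<^sub>R (1/2, -1/4) + u *\<^sub>R (c, 0)"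
    using assms by (auto simp: in_segment)
  have "(1 - u) *\<^sub>R (1/2, -1/4) + u *\<^sub>R (c, 0) = ((1 - u) / 2 + u * c, - (1 - u) / (4::real))"
    by (simp add: field_simps)
  then have eq: "p = ((1 - u) / 2 + u * c, - (1 - u) / 4)" using u(3) by simp
  show ?thesis using u(1,2) eq by blast
qed

lemma seg2_seg3:
  assumes p2: "p \<in> closed_segment (0, -1) (of_int k :: real, 0 :: real)"
    and p3: "p \<in> closed_segment (1/2, -1/4) (c, 0 :: real)" and c: "0 \<le> c" "c \<le> 1"
  shows "p = (c, 0)"
proof -
  obtain t where t: "0 \<le> t" "t \<le> 1" "p = (t * of_int k, t - 1)" using seg2[OF p2] by blast
  obtain s where s: "0 \<le> s" "s \<le> 1" "p = ((1 - s) / 2 + s * c, - (1 - s) / 4)" using seg3[OF p3] by blast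
  have ty: "t - 1 = - (1 - s) / 4" using t s by simp
  have tx: "t * of_int k = (1 - s) / 2 + s * c" using t s by simp
  have sc: "0 \<le> s * c" "s * c \<le> s" using s c by (auto simp: mult_left_le)
  have "s = 1"
  proof (cases "k \<ge> 1")
    case True
    then have "t * of_int k \<ge> t * 1" using t by (intro mult_left_mono) auto
    then have "t * of_int k \<ge> t" by simp
    then have "s \<ge> 1" using tx ty sc s(1,2) by argo
    then show ?thesis using s(2) by simp
  next
    case False
    show ?thesis
    proof (cases "k = 0")
      case True
      then have "(1 - s) / 2 + s * c = 0" using tx by simp
      then have "s \<ge> 1" using sc s(1,2) by argo
      then show ?thesis using s(2) by simp
    next
      case False
      then have "k \<le> -1" using \<open>\<not> k \<ge> 1\<close> by simp
      then have "t * of_int k \<le> t * (-1)" using t by (intro mult_left_mono) auto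
      then have "t * of_int k \<le> - t" by simp
      then have "s \<ge> 1" using tx ty sc s(1,2) by argo
    then show ?thesis using s(2) by simp
    qed
  qed
  then show ?thesis using s by simp
qed

definition posG :: "nat \<Rightarrow> real \<times> real" where
  "posG n = (if n = wv then (1/2, -1/4) else
     (case (from_nat (n div 2) :: rat option) of None \<Rightarrow> (0, -1) | Some q \<Rightarrow> (of_rat q, 0)))"

lemma posG_fv: "posG (fv x) = (case x of None \<Rightarrow> (0, -1) | Some q \<Rightarrow> (of_rat q, 0))"
proof -
  have "fv x \<noteq> wv" by simp
  moreover have "fv x div 2 = to_nat x" by (simp add: fv_def)
  ultimately show ?thesis by (simp add: posG_def)
qed

lemma posG_simps [simp]: "posG wv = (1/2, -1/4)" "posG (fv None) = (0, -1)" "posG (fv (Some q)) = (of_rat q, 0)"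
  by (simp_all add: posG_fv) (simp add: posG_def)

definition \<gamma>G :: "nat \<Rightarrow> nat \<Rightarrow> real \<Rightarrow> real \<times> real" where
  "\<gamma>G u v = (if u \<noteq> wv \<and> v \<noteq> wv \<and> u \<noteq> fv None \<and> v \<noteq> fv None
      then parab (fst (posG u)) (fst (posG v)) else linepath (posG u) (posG v))"

lemma posV: "p \<in> posG ` VG \<longleftrightarrow> p = (1/2, -1/4) \<or> p = (0, -1) \<or> (\<exists>q. p = (of_rat q, 0))"
proof
  assume "p \<in> posG ` VG"
  then obtain n where n: "n \<in> VG" "p = posG n" by blast
  then consider "n = wv" | x where "n = fv x" using VG_cases by blast
  then show "p = (1/2, -1/4) \<or> p = (0, -1) \<or> (\<exists>q. p = (of_rat q, 0))"
  proof cases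
    case 1 then show ?thesis using n by simp
  next
    case 2 then show ?thesis using n by (cases x) auto
  qed
next
  assume "p = (1/2, -1/4) \<or> p = (0, -1) \<or> (\<exists>q. p = (of_rat q, 0))"
  moreover have "wv \<in> VG" "fv x \<in> VG" for x by (auto simp: VG_def)
  ultimately show "p \<in> posG ` VG" by (metis image_eqI posG_simps)
qed

lemma nc_rat:
  assumes "farey_adj (Some x1) (Some y1)" "x1 < y1" "farey_adj (Some x2) (Some y2)" "x2 < y2"
  shows "\<not> (x1 < x2 \<and> x2 < y1 \<and> y1 < y2)"
proof
  assume h: "x1 < x2 \<and> x2 < y1 \<and> y1 < y2"
  have "Some y2 \<noteq> Some x1" "Some y2 \<noteq> Some y1" using h assms by auto
  then obtain t where "Some y2 = Some t" "x1 < t" "t < y1"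
    using no_cross[OF assms(1), of x2 "Some y2"] h assms(3) by blast
  then show False using h by simp
qed

lemma edge_class:
  assumes e: "EG u v"
  shows "(\<exists>a b. {u, v} = {fv (Some a), fv (Some b)} \<and> a < b \<and> farey_adj (Some a) (Some b) \<and>
            path_image (\<gamma>G u v) \<subseteq> PA (of_rat a) (of_rat b) \<and> arc (\<gamma>G u v) \<and>
            pathstart (\<gamma>G u v) = posG u \<and> pathfinish (\<gamma>G u v) = posG v) \<or>
         (\<exists>k. {u, v} = {fv None, fv (Some (of_int k))} \<and>
            path_image (\<gamma>G u v) = closed_segment (0, -1) (of_int k, 0) \<and> arc (\<gamma>G u v) \<and>
            pathstart (\<gamma>G u v) = posG u \<and> pathfinish (\<gamma>G u v) = posG v) \<or>
         (\<exists>c\<in>NW. {u, v} = {wv, fv (Some c)} \<and>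
            path_image (\<gamma>G u v) = closed_segment (1/2, -1/4) (of_rat c, 0) \<and> arc (\<gamma>G u v) \<and>
            pathstart (\<gamma>G u v) = posG u \<and> pathfinish (\<gamma>G u v) = posG v)"
proof -
  have lin: "arc (linepath (posG u) (posG v))" if "posG u \<noteq> posG v" using that by (simp add: arc_linepath)
  from e consider (ff) x y where "u = fv x" "v = fv y" "farey_adj x y"
    | (w1) c where "c \<in> NW" "u = wv" "v = fv (Some c)" | (w2) c where "c \<in> NW" "u = fv (Some c)" "v = wv"
    unfolding EG_def by blast
  then show ?thesis
  proof cases
    case ff
    show ?thesis
    proof (cases x)
      case None
      then obtain b where y: "y = Some b" using ff fadj_NN by (cases y) auto
      then have "de b = 1" using ff None by (simp add: fadj_NS)
      then have b: "b = of_int (nu b)" by (rule de1_eq)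
      have g: "\<gamma>G u v = linepath (0, -1) (of_rat b, 0)" using ff None y by (simp add: \<gamma>G_def)
      have "path_image (\<gamma>G u v) = closed_segment (0, -1) (of_int (nu b), 0)"
        using g b by (metis of_rat_of_int_eq path_image_linepath)
      moreover have "arc (\<gamma>G u v)" using g by (simp add: arc_linepath)
      moreover have "{u, v} = {fv None, fv (Some (of_int (nu b)))}" using ff None y b by simp
      ultimately show ?thesis using g ff None y by auto
    next
      case (Some a)
      show ?thesis
      proof (cases y)
        case None
        then have "de a = 1" using ff Some by (simp add: fadj_SN)
        then have a: "a = of_int (nu a)" by (rule de1_eq)
        have g: "\<gamma>G u v = linepath (of_rat a, 0) (0, -1)" using ff None Some by (simp add: \<gamma>G_def)
        have "path_image (\<gamma>G u v) = closed_segment (0, -1) (of_int (nu a), 0)"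
          using g a by (metis closed_segment_commute of_rat_of_int_eq path_image_linepath)
        moreover have "arc (\<gamma>G u v)" using g by (simp add: arc_linepath)
        moreover have "{u, v} = {fv None, fv (Some (of_int (nu a)))}" using ff None Some a by auto
        ultimately show ?thesis using g ff None Some by auto
      next
        case (Some b)
        note x = \<open>x = Some a\<close>
        have ab: "a \<noteq> b" using ff x Some fadj_irrefl by auto
        then have ab': "(of_rat a :: real) \<noteq> of_rat b" by simp
        have g: "\<gamma>G u v = parab (of_rat a) (of_rat b)" using ff x Some by (simp add: \<gamma>G_def)
        have img: "path_image (\<gamma>G u v) \<subseteq> PA (of_rat a) (of_rat b)" using g parab_img by simp
        have arc: "arc (\<gamma>G u v)" using g parab_arc[OF ab'] by simp
        have se: "pathstart (\<gamma>G u v) = posG u" "pathfinish (\<gamma>G u v) = posG v"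
          using g ff x Some by (simp_all add: parab_ends)
        show ?thesis
        proof (cases "a < b")
          case True
          then show ?thesis using img arc se ff x Some by auto
        next
          case False
          then have "b < a" using ab by simp
          moreover have "{u, v} = {fv (Some b), fv (Some a)}" using ff x Some by auto
          moreover have "farey_adj (Some b) (Some a)" using ff x Some fadj_sym by blast
          moreover have "path_image (\<gamma>G u v) \<subseteq> PA (of_rat b) (of_rat a)" using img PA_sym by metis
          ultimately show ?thesis using arc se by blast
        qed
      qed
    qed
  next
    case w1
    have g: "\<gamma>G u v = linepath (1/2, -1/4) (of_rat c, 0)" using w1 by (simp add: \<gamma>G_def)
    then show ?thesis using w1 by (auto simp: arc_linepath)
  next
    case w2
    have g: "\<gamma>G u v = linepath (of_rat c, 0) (1/2, -1/4)" using w2 by (simp add: \<gamma>G_def)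
    then have "path_image (\<gamma>G u v) = closed_segment (1/2, -1/4) (of_rat c, 0)"
      by (simp add: closed_segment_commute)
    then show ?thesis using w2 g by (auto simp: arc_linepath insert_commute)
  qed
qed

lemma seg2_props:
  assumes "p \<in> closed_segment (0, -1) (of_int k :: real, 0 :: real)"
  shows "snd p \<le> 0" "snd p = 0 \<Longrightarrow> p = (of_int k, 0)" "p \<noteq> (1/2, -1/4)"
proof -
  obtain t :: real where t: "0 \<le> t" "t \<le> 1" "p = (t * of_int k, t - 1)" using seg2[OF assms] by blast
  show "snd p \<le> 0" using t by simp
  show "snd p = 0 \<Longrightarrow> p = (of_int k, 0)" using t by simp
  show "p \<noteq> (1/2, -1/4)"
  proof
    assume "p = (1/2, -1/4)"
    then have t34: "t = 3/4" "t * of_int k = 1/2" using t by auto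
    have "(3/4) * (of_int k :: real) = 1/2" using t34(2)[unfolded t34(1)] .
    then have "3 * (of_int k :: real) = 2" by linarith
    then have "(of_int (3 * k) :: real) = of_int 2" by simp
    then have "3 * k = 2" by (simp only: of_int_eq_iff)
    then show False by presburger
  qed
qed

lemma seg3_props:
  assumes "p \<in> closed_segment (1/2, -1/4) (c :: real, 0 :: real)"
  shows "snd p \<le> 0" "snd p = 0 \<Longrightarrow> p = (c, 0)" "snd p \<ge> -1/4"
proof -
  obtain s :: real where s: "0 \<le> s" "s \<le> 1" "p = ((1 - s) / 2 + s * c, - (1 - s) / 4)" using seg3[OF assms] by blast
  show "snd p \<le> 0" using s by simp
  show "snd p = 0 \<Longrightarrow> p = (c, 0)" using s by simp
  show "snd p \<ge> -1/4" using s by simp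
qed

lemma seg22:
  assumes "p \<in> closed_segment (0, -1) (of_int k :: real, 0 :: real)" "p \<in> closed_segment (0, -1) (of_int k' :: real, 0 :: real)"
    "k \<noteq> k'"
  shows "p = (0, -1)"
proof -
  obtain t :: real where t: "0 \<le> t" "t \<le> 1" "p = (t * of_int k, t - 1)" using seg2[OF assms(1)] by blast
  obtain t' :: real where t': "0 \<le> t'" "t' \<le> 1" "p = (t' * of_int k', t' - 1)" using seg2[OF assms(2)] by blast
  have "t = t'" using t t' by simp
  have "t * of_int k = t' * of_int k'" using t(3) t'(3) by (metis fst_conv)
  then have "t * of_int k = t * of_int k'" using \<open>t = t'\<close> by simp
  then have "t * (of_int k - of_int k') = 0" by (simp add: right_diff_distrib)
  moreover have "(of_int k :: real) - of_int k' \<noteq> 0" using assms(3) by simp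
  ultimately have "t = 0" by simp
  then show ?thesis using t by simp
qed

lemma seg33:
  assumes "p \<in> closed_segment (1/2, -1/4) (c :: real, 0 :: real)" "p \<in> closed_segment (1/2, -1/4) (c' :: real, 0 :: real)"
    "c \<noteq> c'"
  shows "p = (1/2, -1/4)"
proof -
  obtain s :: real where s: "0 \<le> s" "s \<le> 1" "p = ((1 - s) / 2 + s * c, - (1 - s) / 4)" using seg3[OF assms(1)] by blast
  obtain s' :: real where s': "0 \<le> s'" "s' \<le> 1" "p = ((1 - s') / 2 + s' * c', - (1 - s') / 4)" using seg3[OF assms(2)] by blast
  have "s = s'" using s s' by simp
  have "(1 - s) / 2 + s * c = (1 - s') / 2 + s' * c'" using s(3) s'(3) by (metis fst_conv)
  then have "s * c = s * c'" using \<open>s = s'\<close> by simp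
  then have "s * (c - c') = 0" by (simp add: right_diff_distrib)
  then have "s = 0" using assms(3) by simp
  then show ?thesis using s by simp
qed

lemma PA_snd: "p \<in> PA a b \<Longrightarrow> a < b \<Longrightarrow> snd p \<ge> 0 \<and> (snd p = 0 \<longrightarrow> p = (a, 0) \<or> p = (b, 0))"
  using PA_props by blast

lemma posV_snd: "p \<in> posG ` VG \<Longrightarrow> snd p \<le> 0 \<and> (snd p = 0 \<longrightarrow> (\<exists>q. p = (of_rat q, 0)))"
  unfolding posV by auto

lemma vtx: "(of_rat q, 0) \<in> posG ` VG" "(0, -1) \<in> posG ` VG" "(1/2, -1/4) \<in> posG ` VG"
  unfolding posV by auto

lemma cond2:
  assumes e: "EG u v"
  shows "path_image (\<gamma>G u v) \<inter> posG ` VG = {posG u, posG v}"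
proof
  have uv: "u \<in> VG" "v \<in> VG" using EG_V[OF e] by auto
  have se: "pathstart (\<gamma>G u v) = posG u" "pathfinish (\<gamma>G u v) = posG v" using edge_class[OF e] by blast+
  show "{posG u, posG v} \<subseteq> path_image (\<gamma>G u v) \<inter> posG ` VG"
    using se uv pathstart_in_path_image pathfinish_in_path_image by (metis Int_iff empty_subsetI image_eqI insert_subset)
next
  show "path_image (\<gamma>G u v) \<inter> posG ` VG \<subseteq> {posG u, posG v}"
  proof
    fix p assume p: "p \<in> path_image (\<gamma>G u v) \<inter> posG ` VG"
    then have pV: "p \<in> posG ` VG" by simp
    from edge_class[OF e] show "p \<in> {posG u, posG v}"
    proof (elim disjE exE conjE bexE)
      fix a b assume h: "{u, v} = {fv (Some a), fv (Some b)}" "a < b" "path_image (\<gamma>G u v) \<subseteq> PA (of_rat a) (of_rat b)"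
      have pa: "p \<in> PA (of_rat a) (of_rat b)" using p h(3) by auto
      have "snd p = 0" using PA_snd[OF pa] posV_snd[OF pV] h(2) by (simp add: of_rat_less)
      then have "p = (of_rat a, 0) \<or> p = (of_rat b, 0)" using PA_snd[OF pa] h(2) by (simp add: of_rat_less)
      moreover have "{posG u, posG v} = {(of_rat a, 0), (of_rat b, 0)}" using h(1)
        by (auto simp: doubleton_eq_iff)
      ultimately show ?thesis by auto
    next
      fix k assume h: "{u, v} = {fv None, fv (Some (of_int k))}" "path_image (\<gamma>G u v) = closed_segment (0, -1) (of_int k, 0)"
      have ps: "p \<in> closed_segment (0, -1) (of_int k, 0)" using p h(2) by auto
      have pp: "{posG u, posG v} = {(0, -1), (of_int k, 0)}" using h(1) by (auto simp: doubleton_eq_iff)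
      from pV[unfolded posV] show ?thesis
      proof (elim disjE exE)
        assume "p = (1/2, -1/4)" then show ?thesis using seg2_props(3)[OF ps] by simp
      next
        assume "p = (0, -1)" then show ?thesis using pp by simp
      next
        fix q assume "p = (of_rat q, 0)"
        then have "p = (of_int k, 0)" using seg2_props(2)[OF ps] by simp
        then show ?thesis using pp by simp
      qed
    next
      fix c assume h: "c \<in> NW" "{u, v} = {wv, fv (Some c)}" "path_image (\<gamma>G u v) = closed_segment (1/2, -1/4) (of_rat c, 0)"
      have ps: "p \<in> closed_segment (1/2, -1/4) (of_rat c, 0)" using p h(3) by auto
      have pp: "{posG u, posG v} = {(1/2, -1/4), (of_rat c, 0)}" using h(2) by (auto simp: doubleton_eq_iff)
      from pV[unfolded posV] show ?thesis
      proof (elim disjE exE)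
        assume "p = (1/2, -1/4)" then show ?thesis using pp by simp
      next
        assume "p = (0, -1)" then show ?thesis using seg3_props(3)[OF ps] by simp
      next
        fix q assume "p = (of_rat q, 0)"
        then have "p = (of_rat c, 0)" using seg3_props(2)[OF ps] by simp
        then show ?thesis using pp by simp
      qed
    qed
  qed
qed

lemma cond3:
  assumes e1: "EG u v" and e2: "EG u' v'" and ne: "{u, v} \<noteq> {u', v'}"
  shows "path_image (\<gamma>G u v) \<inter> path_image (\<gamma>G u' v') \<subseteq> posG ` VG"
proof
  fix p assume p: "p \<in> path_image (\<gamma>G u v) \<inter> path_image (\<gamma>G u' v')"
  then have p1: "p \<in> path_image (\<gamma>G u v)" and p2: "p \<in> path_image (\<gamma>G u' v')" by auto
  have c01: "0 \<le> (of_rat c :: real) \<and> (of_rat c :: real) \<le> 1" if "c \<in> NW" for c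
    using NW_sub[OF that] by (simp add: zero_le_of_rat_iff of_rat_le_1_iff)
  show "p \<in> posG ` VG"
    using edge_class[OF e1]
  proof (elim disjE exE conjE bexE)
    fix a b assume h: "{u, v} = {fv (Some a), fv (Some b)}" "a < b" "farey_adj (Some a) (Some b)"
      "path_image (\<gamma>G u v) \<subseteq> PA (of_rat a) (of_rat b)"
    have pa: "p \<in> PA (of_rat a) (of_rat b)" using p1 h(4) by auto
    have ab: "(of_rat a :: real) < of_rat b" using h(2) by (simp add: of_rat_less)
    show ?thesis using edge_class[OF e2]
    proof (elim disjE exE conjE bexE)
      fix a' b' assume h': "{u', v'} = {fv (Some a'), fv (Some b')}" "a' < b'" "farey_adj (Some a') (Some b')"
        "path_image (\<gamma>G u' v') \<subseteq> PA (of_rat a') (of_rat b')"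
      have pa': "p \<in> PA (of_rat a') (of_rat b')" using p2 h'(4) by auto
      have ab': "(of_rat a' :: real) < of_rat b'" using h'(2) by (simp add: of_rat_less)
      have "(a, b) \<noteq> (a', b')" using ne h h' by auto
      then have nq: "((of_rat a :: real), (of_rat b :: real)) \<noteq> (of_rat a', of_rat b')" by simp
      have n1: "\<not> ((of_rat a :: real) < of_rat a' \<and> (of_rat a' :: real) < of_rat b \<and> (of_rat b :: real) < of_rat b')"
        using nc_rat[OF h(3) h(2) h'(3) h'(2)] by (simp add: of_rat_less)
      have n2: "\<not> ((of_rat a' :: real) < of_rat a \<and> (of_rat a :: real) < of_rat b' \<and> (of_rat b' :: real) < of_rat b)"
        using nc_rat[OF h'(3) h'(2) h(3) h(2)] by (simp add: of_rat_less)
      have "p = (of_rat a, 0) \<or> p = (of_rat b, 0)" using PA_PA[OF pa pa' ab ab' nq n1 n2] .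
      then show ?thesis using vtx by auto
    next
      fix k assume h': "path_image (\<gamma>G u' v') = closed_segment (0, -1) (of_int k, 0)"
      have ps: "p \<in> closed_segment (0, -1) (of_int k, 0)" using p2 h' by auto
      have "snd p = 0" using PA_snd[OF pa ab] seg2_props(1)[OF ps] by simp
      then have "p = (of_int k, 0)" using seg2_props(2)[OF ps] by simp
      then show ?thesis using vtx(1)[of "of_int k"] by simp
    next
      fix c assume h': "c \<in> NW" "path_image (\<gamma>G u' v') = closed_segment (1/2, -1/4) (of_rat c, 0)"
      have ps: "p \<in> closed_segment (1/2, -1/4) (of_rat c, 0)" using p2 h' by auto
      have "snd p = 0" using PA_snd[OF pa ab] seg3_props(1)[OF ps] by simp
      then have "p = (of_rat c, 0)" using seg3_props(2)[OF ps] by simp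
      then show ?thesis using vtx by simp
    qed
  next
    fix k assume h: "{u, v} = {fv None, fv (Some (of_int k))}" "path_image (\<gamma>G u v) = closed_segment (0, -1) (of_int k, 0)"
    have ps: "p \<in> closed_segment (0, -1) (of_int k, 0)" using p1 h by auto
    show ?thesis using edge_class[OF e2]
    proof (elim disjE exE conjE bexE)
      fix a' b' assume h': "a' < b'" "path_image (\<gamma>G u' v') \<subseteq> PA (of_rat a') (of_rat b')"
      have pa': "p \<in> PA (of_rat a') (of_rat b')" using p2 h'(2) by auto
      have ab': "(of_rat a' :: real) < of_rat b'" using h'(1) by (simp add: of_rat_less)
      have "snd p = 0" using PA_snd[OF pa' ab'] seg2_props(1)[OF ps] by simp
      then have "p = (of_int k, 0)" using seg2_props(2)[OF ps] by simp
      then show ?thesis using vtx(1)[of "of_int k"] by simp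
    next
      fix k' assume h': "{u', v'} = {fv None, fv (Some (of_int k'))}" "path_image (\<gamma>G u' v') = closed_segment (0, -1) (of_int k', 0)"
      have ps': "p \<in> closed_segment (0, -1) (of_int k', 0)" using p2 h' by auto
      have "k \<noteq> k'" using ne h h' by auto
      then have "p = (0, -1)" using seg22[OF ps ps'] by simp
      then show ?thesis using vtx by simp
    next
      fix c assume h': "c \<in> NW" "path_image (\<gamma>G u' v') = closed_segment (1/2, -1/4) (of_rat c, 0)"
      have ps': "p \<in> closed_segment (1/2, -1/4) (of_rat c, 0)" using p2 h' by auto
      have "p = (of_rat c, 0)" using seg2_seg3[OF ps ps'] c01[OF h'(1)] by blast
      then show ?thesis using vtx by simp
    qed
  next
    fix c assume h: "c \<in> NW" "{u, v} = {wv, fv (Some c)}" "path_image (\<gamma>G u v) = closed_segment (1/2, -1/4) (of_rat c, 0)"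
    have ps: "p \<in> closed_segment (1/2, -1/4) (of_rat c, 0)" using p1 h by auto
    show ?thesis using edge_class[OF e2]
    proof (elim disjE exE conjE bexE)
      fix a' b' assume h': "a' < b'" "path_image (\<gamma>G u' v') \<subseteq> PA (of_rat a') (of_rat b')"
      have pa': "p \<in> PA (of_rat a') (of_rat b')" using p2 h'(2) by auto
      have ab': "(of_rat a' :: real) < of_rat b'" using h'(1) by (simp add: of_rat_less)
      have "snd p = 0" using PA_snd[OF pa' ab'] seg3_props(1)[OF ps] by simp
      then have "p = (of_rat c, 0)" using seg3_props(2)[OF ps] by simp
      then show ?thesis using vtx by simp
    next
      fix k' assume h': "path_image (\<gamma>G u' v') = closed_segment (0, -1) (of_int k', 0)"
      have ps': "p \<in> closed_segment (0, -1) (of_int k', 0)" using p2 h' by auto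
      have "p = (of_rat c, 0)" using seg2_seg3[OF ps' ps] c01[OF h(1)] by blast
      then show ?thesis using vtx by simp
    next
      fix c' assume h': "c' \<in> NW" "{u', v'} = {wv, fv (Some c')}" "path_image (\<gamma>G u' v') = closed_segment (1/2, -1/4) (of_rat c', 0)"
      have ps': "p \<in> closed_segment (1/2, -1/4) (of_rat c', 0)" using p2 h' by auto
      have "c \<noteq> c'" using ne h h' by auto
      then have "(of_rat c :: real) \<noteq> of_rat c'" by simp
      then have "p = (1/2, -1/4)" using seg33[OF ps ps'] by simp
      then show ?thesis using vtx by simp
    qed
  qed
qed

lemma inj_posG: "inj_on posG VG"
proof (rule inj_onI)
  fix m n assume mn: "m \<in> VG" "n \<in> VG" "posG m = posG n"
  from VG_cases[OF mn(1)] VG_cases[OF mn(2)] show "m = n"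
  proof (elim disjE exE)
    fix x y assume "m = fv x" "n = fv y"
    then show "m = n" using mn(3) by (cases x; cases y) auto
  next
    fix x assume "m = wv" "n = fv x"
    then show "m = n" using mn(3) by (cases x) auto
  next
    fix x assume "m = fv x" "n = wv"
    then show "m = n" using mn(3) by (cases x) auto
  qed simp
qed

lemma planar_G: "planar VG EG"
  unfolding planar_def
proof (intro exI conjI allI impI)
  show "inj_on posG VG" by (rule inj_posG)
next
  fix u v assume e: "EG u v"
  show "arc (\<gamma>G u v)" "pathstart (\<gamma>G u v) = posG u" "pathfinish (\<gamma>G u v) = posG v"
    using edge_class[OF e] by blast+
  show "path_image (\<gamma>G u v) \<inter> posG ` VG = {posG u, posG v}" by (rule cond2[OF e])
next
  fix u v u' v' assume "EG u v" "EG u' v'" "{u, v} \<noteq> {u', v'}"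
  then show "path_image (\<gamma>G u v) \<inter> path_image (\<gamma>G u' v') \<subseteq> posG ` VG" by (rule cond3)
qed

theorem proposition3p1:
  shows "\<exists>(V :: nat set) E. simple_graph V E \<and> countable V \<and> planar V E \<and> Pi_graph V E \<and>
           induced_subgraph_emb (UNIV :: rat option set) farey_adj V E \<and>
           \<not> is_minor V E (UNIV :: rat option set) farey_adj"
proof (intro exI conjI)
  show "simple_graph VG EG" by (rule simple_G)
  show "countable VG" by simp
  show "planar VG EG" by (rule planar_G)
  show "Pi_graph VG EG" by (rule G_Pi)
  show "induced_subgraph_emb (UNIV :: rat option set) farey_adj VG EG"
    unfolding induced_subgraph_emb_def
    by (intro exI[of _ fv] conjI) (auto simp: inj_on_def VG_def)
  show "\<not> is_minor VG EG (UNIV :: rat option set) farey_adj" by (rule not_minor)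
qed

end
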